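(* Assume (A1), (A2) and (A3), let $(\mu_N)_N$ be an approximating sequence for $\mu$, and fix $\eta>0$ and $\tilde u\in\mathcal U$. Then $\mathcal J_\mu^\eta$ has a unique minimizer $\bar u$ on $\mathcal U$, and any sequence $(u_N^* )_N$ with $u_N^*\in\arg\min_{\mathcal U}\mathcal J_{\mu_N}^\eta$ converges to $\bar u$ in the $L^2([0,T],\mathbb{R}^m)$-norm.
   Context: Fix integers $n,m,p\ge1$, $T>0$, $\alpha>0$, $\psi\in C^0([0,T],\mathbb{R}^m)$. Let $\mu=\mathcal N(\theta_{\rm prior},\Sigma_{\rm prior})$ be a Gaussian probability measure on $\mathbb{R}^p$ with $\Sigma_{\rm prior}$ symmetric positive definite. Let $\mathcal U=\{u\in L^\infty([0,T],\mathbb{R}^m):\max_{1\le i\le m}\|u_i\|_{L^\infty}\le1\}$. For each $\theta\in\mathbb{R}^p$ let $f_0^\theta,\dots,f_m^\theta$ be vector fields on $\mathbb{R}^n$, write $f_u^\theta=f_0^\theta+\sum_{i=1}^m u_if_i^\theta$, and let $x_u^\theta$ be the solution of $\dot x^\theta=f_u^\theta(x^\theta)$, $x^\theta(0)=0$. For a probability measure $\nu$ on $\mathbb{R}^p$, a fixed $\tilde u\in\mathcal U$ and $\eta\ge0$ define $$\mathcal J_\nu^\eta(u)=-\langle\psi,u\rangle_{L^2}+\alpha\,\mathbb{E}_\nu\Big[\int_0^T|x_u^\theta(t)|^2dt\Big]+\frac\eta2\|u-\tilde u\|_{L^2}^2 .$$ Assumption (A1): $(\theta,x)\mapsto f_i^\theta(x)$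 is smooth on $\mathbb{R}^p\times\mathbb{R}^n$ for all $0\le i\le m$, and for each $\theta$ there is $c^\theta$ with $\sup_{0\le i\le m}|f_i^\theta(x)|\le c^\theta(1+|x|)$. Assumption (A2): there exist $a\in L^2(\mathbb{R}^p,\mu)\cap L^\infty_{loc}(\mathbb{R}^p)$ and $b\in L^\infty_{loc}(\mathbb{R}^p)$ with $|x_u^\theta(t)|\le a(\theta)$ and $|\partial_{\theta_i}x_u^\theta(t)|\le b(\theta)$ for all $1\le i\le p$, $u\in\mathcal U$, $t\in[0,T]$, $\theta\in\mathbb{R}^p$. Assumption (A3): the map $u\mapsto\mathbb{E}_\mu\big[\int_0^T|x_u^\theta(t)|^2dt\big]$ is convex on $\mathcal U$. An approximating sequence for $\mu$ is a sequence $(\mu_N)_{N\ge1}$ of probability measures on $\mathbb{R}^p$, each supported on finitely many points of the closed ball $\bar B(0,N)$, with $\mu_N\to\mu$ in the $1$-Wasserstein topology, and such that for every $\eta\ge0$, $\tilde u\in\mathcal U$ and every sequence $(u_N)$ in $\mathcal U$, $\mathcal J_{\mu_N}^\eta(u_N)-\mathcal J_\mu^\eta(u_N)\to0$. *)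

theory Defs
  imports "HOL-Analysis.Analysis" "HOL-Probability.Probability"
begin

fun Ck :: "nat \<Rightarrow> ('a::euclidean_space \<Rightarrow> 'b::real_normed_vector) \<Rightarrow> bool" where
  "Ck 0 g = continuous_on UNIV g"
| "Ck (Suc k) g = ((\<forall>z. g differentiable (at z)) \<and>
      (\<forall>e\<in>Basis. Ck k (\<lambda>z. frechet_derivative g (at z) e)))"

definition smooth :: "('a::euclidean_space \<Rightarrow> 'b::real_normed_vector) \<Rightarrow> bool" where
  "smooth g \<longleftrightarrow> (\<forall>k. Ck k g)"

definition gaussian_measure :: "real^'p \<Rightarrow> real^'p^'p \<Rightarrow> (real^'p) measure" where
  "gaussian_measure m S = density lborel (\<lambda>\<theta>. ennreal
     ((2 * pi) powr (- real CARD('p) / 2) * (det S) powr (-1/2) *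
      exp (- ((\<theta> - m) \<bullet> (matrix_inv S *v (\<theta> - m))) / 2)))"

definition couplings :: "'a::euclidean_space measure \<Rightarrow> 'a measure \<Rightarrow> ('a \<times> 'a) measure set" where
  "couplings \<mu> \<nu> = {\<pi>. prob_space \<pi> \<and> sets \<pi> = sets borel \<and>
      distr \<pi> borel fst = \<mu> \<and> distr \<pi> borel snd = \<nu>}"

definition W1 :: "'a::euclidean_space measure \<Rightarrow> 'a measure \<Rightarrow> ennreal" where
  "W1 \<mu> \<nu> = (INF \<pi> \<in> couplings \<mu> \<nu>. \<integral>\<^sup>+ z. ennreal (dist (fst z) (snd z)) \<partial>\<pi>)"

text \<open>Admissible controls: measurable on [0,T], each component bounded by 1 on [0,T]
  (pointwise representatives of elements of the L^infinity unit ball).\<close>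
definition Uad :: "real \<Rightarrow> (real \<Rightarrow> real^'m) set" where
  "Uad T = {u. u \<in> borel_measurable (lebesgue_on {0..T}) \<and>
              (\<forall>t\<in>{0..T}. \<forall>i. \<bar>u t $ i\<bar> \<le> 1)}"

definition fctrl :: "(real^'p \<Rightarrow> real^'n \<Rightarrow> real^'n) \<Rightarrow> ('m \<Rightarrow> real^'p \<Rightarrow> real^'n \<Rightarrow> real^'n)
      \<Rightarrow> real^'p \<Rightarrow> real^'m \<Rightarrow> real^'n \<Rightarrow> real^'n" where
  "fctrl f0 f \<theta> w x = f0 \<theta> x + (\<Sum>i\<in>UNIV. (w $ i) *\<^sub>R f i \<theta> x)"

definition traj :: "real \<Rightarrow> (real^'p \<Rightarrow> real^'n \<Rightarrow> real^'n) \<Rightarrow> ('m \<Rightarrow> real^'p \<Rightarrow> real^'n \<Rightarrow> real^'n)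
      \<Rightarrow> (real \<Rightarrow> real^'m) \<Rightarrow> real^'p \<Rightarrow> real \<Rightarrow> real^'n" where
  "traj T f0 f u \<theta> = (THE x. continuous_on {0..T} x \<and>
      (\<forall>t\<in>{0..T}. ((\<lambda>s. fctrl f0 f \<theta> (u s) (x s)) has_integral x t) {0..t}) \<and>
      (\<forall>t. t \<notin> {0..T} \<longrightarrow> x t = 0))"

definition Ecost :: "real \<Rightarrow> (real^'p \<Rightarrow> real^'n \<Rightarrow> real^'n) \<Rightarrow> ('m \<Rightarrow> real^'p \<Rightarrow> real^'n \<Rightarrow> real^'n)
      \<Rightarrow> (real^'p) measure \<Rightarrow> (real \<Rightarrow> real^'m) \<Rightarrow> real" where
  "Ecost T f0 f \<nu> u = (\<integral>\<theta>. integral {0..T} (\<lambda>t. (norm (traj T f0 f u \<theta> t))\<^sup>2) \<partial>\<nu>)"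

definition Jfun :: "real \<Rightarrow> real \<Rightarrow> (real \<Rightarrow> real^'m) \<Rightarrow> (real^'p \<Rightarrow> real^'n \<Rightarrow> real^'n)
      \<Rightarrow> ('m \<Rightarrow> real^'p \<Rightarrow> real^'n \<Rightarrow> real^'n) \<Rightarrow> (real \<Rightarrow> real^'m) \<Rightarrow> real
      \<Rightarrow> (real^'p) measure \<Rightarrow> (real \<Rightarrow> real^'m) \<Rightarrow> real" where
  "Jfun T \<alpha> \<psi> f0 f ut \<eta> \<nu> u =
     - integral {0..T} (\<lambda>t. \<psi> t \<bullet> u t) + \<alpha> * Ecost T f0 f \<nu> u
     + \<eta> / 2 * integral {0..T} (\<lambda>t. (norm (u t - ut t))\<^sup>2)"

definition approx_seq :: "real \<Rightarrow> real \<Rightarrow> (real \<Rightarrow> real^'m) \<Rightarrow> (real^'p \<Rightarrow> real^'n \<Rightarrow> real^'n)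
      \<Rightarrow> ('m \<Rightarrow> real^'p \<Rightarrow> real^'n \<Rightarrow> real^'n) \<Rightarrow> (real^'p) measure
      \<Rightarrow> (nat \<Rightarrow> (real^'p) measure) \<Rightarrow> bool" where
  "approx_seq T \<alpha> \<psi> f0 f \<mu> \<mu>N \<longleftrightarrow>
     (\<forall>N\<ge>1. prob_space (\<mu>N N) \<and> sets (\<mu>N N) = sets borel \<and>
        (\<exists>S. finite S \<and> S \<subseteq> cball 0 (real N) \<and> emeasure (\<mu>N N) (UNIV - S) = 0)) \<and>
     ((\<lambda>N. W1 (\<mu>N N) \<mu>) \<longlonglongrightarrow> 0) \<and>
     (\<forall>\<eta>\<ge>0. \<forall>ut\<in>Uad T. \<forall>uN. (\<forall>N. uN N \<in> Uad T) \<longrightarrow>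
        ((\<lambda>N. Jfun T \<alpha> \<psi> f0 f ut \<eta> (\<mu>N N) (uN N) - Jfun T \<alpha> \<psi> f0 f ut \<eta> \<mu> (uN N))
           \<longlonglongrightarrow> 0))"

definition is_minimizer :: "(real \<Rightarrow> real^'m) set \<Rightarrow> ((real \<Rightarrow> real^'m) \<Rightarrow> real)
      \<Rightarrow> (real \<Rightarrow> real^'m) \<Rightarrow> bool" where
  "is_minimizer U J u \<longleftrightarrow> u \<in> U \<and> (\<forall>v\<in>U. J u \<le> J v)"

end

theory Submission
  imports Defs
begin

lemma gronwall:
  fixes \<phi> :: "real \<Rightarrow> real"
  assumes cont: "continuous_on {0..T} \<phi>" and K: "0 \<le> K"
    and le: "\<And>t. t \<in> {0..T} \<Longrightarrow> \<phi> t \<le> \<epsilon> + K * integral {0..t} \<phi>"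
    and t: "t \<in> {0..T}"
  shows "\<phi> t \<le> \<epsilon> * exp (K * t)"
proof -
  define \<Phi> where "\<Phi> s = integral {0..s} \<phi>" for s
  define h where "h s = exp (- K * s) * (\<epsilon> + K * \<Phi> s)" for s
  have Phic: "continuous_on {0..T} \<Phi>"
    unfolding \<Phi>_def by (rule indefinite_integral_continuous_1[OF integrable_continuous_real[OF cont]])
  have hc: "continuous_on {0..t} h"
    unfolding h_def using t
    by (intro continuous_intros continuous_on_subset[OF Phic]) auto
  have "h t \<le> h 0"
  proof (rule DERIV_nonpos_imp_decreasing_open[of 0 t h])
    show "0 \<le> t" using t by auto
    show "continuous_on {0..t} h" by fact
    fix x assume x: "0 < x" "x < t"
    have "(\<Phi> has_vector_derivative \<phi> x) (at x within {0..T})"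
      unfolding \<Phi>_def by (rule integral_has_vector_derivative[OF cont]) (use x t in auto)
    moreover have "at x within {0..T} = at x" using x t by (intro at_within_Icc_at) auto
    ultimately have d: "(\<Phi> has_real_derivative \<phi> x) (at x)"
      by (simp add: has_real_derivative_iff_has_vector_derivative)
    have "(h has_real_derivative (- K * exp (- K * x) * (\<epsilon> + K * \<Phi> x) + exp (- K * x) * (K * \<phi> x))) (at x)"
      unfolding h_def
      by (rule derivative_eq_intros d refl | simp)+
    moreover have "- K * exp (- K * x) * (\<epsilon> + K * \<Phi> x) + exp (- K * x) * (K * \<phi> x)
        = K * exp (- K * x) * (\<phi> x - (\<epsilon> + K * \<Phi> x))" by (simp add: algebra_simps)
    moreover have "K * exp (- K * x) * (\<phi> x - (\<epsilon> + K * \<Phi> x)) \<le> 0"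
      using le[of x] x t K unfolding \<Phi>_def
      by (intro mult_nonneg_nonpos) auto
    ultimately show "\<exists>y. (h has_real_derivative y) (at x) \<and> y \<le> 0" by auto
  qed
  then have "exp (- K * t) * (\<epsilon> + K * \<Phi> t) \<le> \<epsilon>" by (simp add: h_def \<Phi>_def)
  then have "\<epsilon> + K * \<Phi> t \<le> \<epsilon> * exp (K * t)"
    by (simp add: exp_minus field_simps)
  then show ?thesis using le[OF t] unfolding \<Phi>_def by linarith
qed

lemma pow_has_integral:
  fixes t :: real
  assumes "0 \<le> t"
  shows "((\<lambda>s. s ^ k) has_integral t ^ Suc k / real (Suc k)) {0..t}"
proof -
  have "((\<lambda>s. s ^ k) has_integral ((\<lambda>x. x ^ Suc k / real (Suc k)) t - (\<lambda>x. x ^ Suc k / real (Suc k)) 0)) {0..t}"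
  proof (rule fundamental_theorem_of_calculus[OF assms])
    fix x assume "x \<in> {0..t}"
    have "((\<lambda>x. x ^ Suc k / real (Suc k)) has_real_derivative x ^ k) (at x)"
      by (rule derivative_eq_intros refl | simp)+
    then show "((\<lambda>x. x ^ Suc k / real (Suc k)) has_vector_derivative x ^ k) (at x within {0..t})"
      by (simp add: has_real_derivative_iff_has_vector_derivative has_vector_derivative_at_within)
  qed
  then show ?thesis by simp
qed

lemma picard_exists:
  fixes G :: "real \<Rightarrow> 'a::euclidean_space \<Rightarrow> 'a"
  assumes T: "0 \<le> T" and L: "0 \<le> L"
    and intg: "\<And>y. continuous_on {0..T} y \<Longrightarrow> (\<lambda>s. G s (y s)) integrable_on {0..T}"
    and lip: "\<And>s x y. s \<in> {0..T} \<Longrightarrow> norm (G s x - G s y) \<le> L * norm (x - y)"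
    and bnd: "\<And>s x. s \<in> {0..T} \<Longrightarrow> norm (G s x) \<le> M"
  shows "\<exists>x. continuous_on {0..T} x \<and> (\<forall>t\<in>{0..T}. ((\<lambda>s. G s (x s)) has_integral x t) {0..t})"
proof -
  define P where "P y = (\<lambda>t. integral {0..t} (\<lambda>s. G s (y s)))" for y :: "real \<Rightarrow> 'a"
  define xs where "xs k = (P ^^ k) (\<lambda>t. 0)" for k
  have xsS: "xs (Suc k) = P (xs k)" for k by (simp add: xs_def)
  have intsub: "(\<lambda>s. G s (y s)) integrable_on {0..t}" if "continuous_on {0..T} y" "t \<in> {0..T}" for y t
    using integrable_on_subinterval[OF intg[OF that(1)]] that(2) by auto
  have Pc: "continuous_on {0..T} (P y)" if "continuous_on {0..T} y" for y
    unfolding P_def by (rule indefinite_integral_continuous_1[OF intg[OF that]])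
  have xsc: "continuous_on {0..T} (xs k)" for k
    by (induction k) (auto simp: xs_def intro: Pc)
  have M: "0 \<le> M" using bnd[of 0 0] T by (auto intro: order_trans[OF norm_ge_zero])
  define D where "D k t = M * L ^ k * t ^ Suc k / fact (Suc k)" for k and t :: real
  have Dint: "((\<lambda>s. L * D k s) has_integral D (Suc k) t) {0..t}" if "0 \<le> t" for k t
  proof -
    have "((\<lambda>s. (L * M * L ^ k / fact (Suc k)) * s ^ Suc k) has_integral
        (L * M * L ^ k / fact (Suc k)) * (t ^ Suc (Suc k) / real (Suc (Suc k)))) {0..t}"
      by (rule has_integral_mult_right[OF pow_has_integral[OF that]])
    moreover have "(L * M * L ^ k / fact (Suc k)) * (t ^ Suc (Suc k) / real (Suc (Suc k))) = D (Suc k) t"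
      unfolding D_def by (simp add: field_simps)
    moreover have "(\<lambda>s. (L * M * L ^ k / fact (Suc k)) * s ^ Suc k) = (\<lambda>s. L * D k s)"
      unfolding D_def by (auto simp: field_simps)
    ultimately show ?thesis by simp
  qed
  have B: "\<forall>t\<in>{0..T}. norm (xs (Suc k) t - xs k t) \<le> D k t" for k
  proof (induction k)
    case 0
    show ?case
    proof
      fix t assume t: "t \<in> {0..T}"
      have "norm (xs (Suc 0) t - xs 0 t) = norm (integral {0..t} (\<lambda>s. G s 0))"
        by (simp add: xs_def P_def)
      also have "\<dots> \<le> integral {0..t} (\<lambda>s. M)"
        using t by (intro integral_norm_bound_integral intsub[of "\<lambda>s. 0", simplified]) (auto intro: bnd)
      also have "\<dots> = D 0 t" using t by (simp add: D_def)
      finally show "norm (xs (Suc 0) t - xs 0 t) \<le> D 0 t" .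
    qed
  next
    case (Suc k)
    show ?case
    proof
      fix t assume t: "t \<in> {0..T}"
      have "xs (Suc (Suc k)) t - xs (Suc k) t
          = integral {0..t} (\<lambda>s. G s (xs (Suc k) s) - G s (xs k s))"
        unfolding xsS P_def
        by (rule integral_diff[symmetric]) (intro intsub xsc t Pc[unfolded P_def])+
      then have "norm (xs (Suc (Suc k)) t - xs (Suc k) t)
          = norm (integral {0..t} (\<lambda>s. G s (xs (Suc k) s) - G s (xs k s)))" by simp
      also have "\<dots> \<le> integral {0..t} (\<lambda>s. L * D k s)"
      proof (rule integral_norm_bound_integral)
        show "(\<lambda>s. G s (xs (Suc k) s) - G s (xs k s)) integrable_on {0..t}"
          by (intro integrable_diff intsub xsc t)
        show "(\<lambda>s. L * D k s) integrable_on {0..t}" using Dint[of t] t by auto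
        fix s assume s: "s \<in> {0..t}"
        then have s': "s \<in> {0..T}" using t by auto
        have "norm (G s (xs (Suc k) s) - G s (xs k s)) \<le> L * norm (xs (Suc k) s - xs k s)"
          by (rule lip[OF s'])
        also have "\<dots> \<le> L * D k s" using Suc.IH s' L by (auto intro: mult_left_mono)
        finally show "norm (G s (xs (Suc k) s) - G s (xs k s)) \<le> L * D k s" .
      qed
      also have "\<dots> = D (Suc k) t" using Dint[of t k] t by (auto dest: integral_unique)
      finally show "norm (xs (Suc (Suc k)) t - xs (Suc k) t) \<le> D (Suc k) t" .
    qed
  qed
  define E where "E k = M * T * ((L * T) ^ k / fact k)" for k
  have sumE: "summable E"
    unfolding E_def by (intro summable_mult) (use summable_exp[of "L*T"] in \<open>simp add: field_simps\<close>)
  have DE: "norm (xs (Suc k) t - xs k t) \<le> E k" if t: "t \<in> {0..T}" for k t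
  proof -
    have "D k t \<le> D k T"
      unfolding D_def using t M L
      by (intro divide_right_mono mult_left_mono power_mono) auto
    also have "D k T = M * T * ((L * T) ^ k / fact (Suc k))"
      unfolding D_def by (simp add: power_mult_distrib field_simps)
    also have "\<dots> \<le> E k"
      unfolding E_def using M T L
      by (intro mult_left_mono divide_left_mono) (auto simp: fact_mono)
    finally show ?thesis using B[of k] t by (meson order_trans)
  qed
  define X where "X t = (\<Sum>i. xs (Suc i) t - xs i t)" for t
  have tele: "xs k t = (\<Sum>i<k. xs (Suc i) t - xs i t)" for k t
    by (subst sum_lessThan_telescope) (simp add: xs_def)
  have ul: "uniform_limit {0..T} xs X sequentially"
  proof -
    have "uniform_limit {0..T} (\<lambda>n t. \<Sum>i<n. xs (Suc i) t - xs i t) X sequentially"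
      unfolding X_def by (rule Weierstrass_m_test[OF DE sumE])
    then show ?thesis by (simp add: tele[symmetric])
  qed
  have Xc: "continuous_on {0..T} X"
    by (rule uniform_limit_theorem[OF _ ul]) (auto intro: xsc always_eventually)
  have "((\<lambda>s. G s (X s)) has_integral X t) {0..t}" if t: "t \<in> {0..T}" for t
  proof -
    have lim1: "(\<lambda>k. xs (Suc k) t) \<longlonglongrightarrow> X t"
      using ul t unfolding uniform_limit_iff
      by (intro LIMSEQ_Suc tendstoI) (auto elim!: eventually_mono)
    have lim2: "(\<lambda>k. xs (Suc k) t) \<longlonglongrightarrow> integral {0..t} (\<lambda>s. G s (X s))"
    proof (rule tendstoI)
      fix e :: real assume e: "e > 0"
      define e' where "e' = e / (L * T + 1)"
      have e': "e' > 0" using e L T unfolding e'_def by (intro divide_pos_pos add_nonneg_pos mult_nonneg_nonneg) auto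
      have "\<forall>\<^sub>F k in sequentially. \<forall>s\<in>{0..T}. dist (xs k s) (X s) < e'"
        using ul e' unfolding uniform_limit_iff by auto
      then show "\<forall>\<^sub>F k in sequentially. dist (xs (Suc k) t) (integral {0..t} (\<lambda>s. G s (X s))) < e"
      proof (rule eventually_mono)
        fix k assume k: "\<forall>s\<in>{0..T}. dist (xs k s) (X s) < e'"
        have "xs (Suc k) t - integral {0..t} (\<lambda>s. G s (X s))
            = integral {0..t} (\<lambda>s. G s (xs k s) - G s (X s))"
          unfolding xsS P_def
          by (rule integral_diff[symmetric]) (intro intsub xsc Xc t)+
        then have "dist (xs (Suc k) t) (integral {0..t} (\<lambda>s. G s (X s)))
            = norm (integral {0..t} (\<lambda>s. G s (xs k s) - G s (X s)))" by (simp add: dist_norm)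
        also have "\<dots> \<le> integral {0..t} (\<lambda>s. L * e')"
        proof (rule integral_norm_bound_integral)
          show "(\<lambda>s. G s (xs k s) - G s (X s)) integrable_on {0..t}"
            by (intro integrable_diff intsub xsc Xc t)
          show "(\<lambda>s. L * e') integrable_on {0..t}" by (rule integrable_const_ivl)
          fix s assume s: "s \<in> {0..t}"
          then have s': "s \<in> {0..T}" using t by auto
          have "norm (G s (xs k s) - G s (X s)) \<le> L * norm (xs k s - X s)" by (rule lip[OF s'])
          also have "\<dots> \<le> L * e'" using k s' L by (intro mult_left_mono) (auto simp: dist_norm less_imp_le)
          finally show "norm (G s (xs k s) - G s (X s)) \<le> L * e'" .
        qed
        also have "\<dots> = t * (L * e')" using t by simp
        also have "\<dots> \<le> T * (L * e')" using t L e' by (intro mult_right_mono) auto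
        also have "\<dots> < e"
        proof -
          have "T * (L * e') = (L * T) * e / (L * T + 1)" unfolding e'_def by simp
          also have "\<dots> < e"
          proof -
            have p: "0 \<le> L * T" using L T by simp
            then have "(L * T) * e < (L * T + 1) * e" using e by simp
            then show ?thesis using p by (simp add: divide_less_eq mult.commute)
          qed
          finally show ?thesis .
        qed
        finally show "dist (xs (Suc k) t) (integral {0..t} (\<lambda>s. G s (X s))) < e" .
      qed
    qed
    have "X t = integral {0..t} (\<lambda>s. G s (X s))" using LIMSEQ_unique[OF lim1 lim2] .
    moreover have "(\<lambda>s. G s (X s)) integrable_on {0..t}" by (intro intsub Xc t)
    ultimately show ?thesis by (simp add: has_integral_integral)
  qed
  then show ?thesis using Xc by blast
qed


definition sol :: "real \<Rightarrow> (real^'p \<Rightarrow> real^'n \<Rightarrow> real^'n) \<Rightarrow> ('m \<Rightarrow> real^'p \<Rightarrow> real^'n \<Rightarrow> real^'n)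
      \<Rightarrow> (real \<Rightarrow> real^'m) \<Rightarrow> real^'p \<Rightarrow> (real \<Rightarrow> real^'n) \<Rightarrow> bool" where
  "sol T f0 f u \<theta> x \<longleftrightarrow> continuous_on {0..T} x \<and>
      (\<forall>t\<in>{0..T}. ((\<lambda>s. fctrl f0 f \<theta> (u s) (x s)) has_integral x t) {0..t}) \<and>
      (\<forall>t. t \<notin> {0..T} \<longrightarrow> x t = 0)"

lemma traj_sol_def: "traj T f0 f u \<theta> = (THE x. sol T f0 f u \<theta> x)"
  unfolding traj_def sol_def by simp

lemma norm_le_card_box:
  fixes w :: "real^'m"
  assumes "\<And>i. \<bar>w $ i\<bar> \<le> 1"
  shows "norm w \<le> real CARD('m)"
proof -
  have "norm w \<le> (\<Sum>i\<in>UNIV. \<bar>w $ i\<bar>)" by (rule norm_le_l1_cart)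
  also have "\<dots> \<le> (\<Sum>i\<in>(UNIV::'m set). 1)" by (intro sum_mono assms)
  also have "\<dots> = real CARD('m)" by simp
  finally show ?thesis .
qed

lemma Uad_bound: "u \<in> Uad T \<Longrightarrow> t \<in> {0..T} \<Longrightarrow> norm (u t) \<le> real CARD('m)"
  for u :: "real \<Rightarrow> real^'m"
  unfolding Uad_def by (auto intro: norm_le_card_box)

lemma Uad_meas: "u \<in> Uad T \<Longrightarrow> u \<in> borel_measurable (lebesgue_on {0..T})"
  unfolding Uad_def by auto

lemma meas_nth: "u \<in> borel_measurable M \<Longrightarrow> (\<lambda>s. (u s :: real^'m) $ i) \<in> borel_measurable M"
  by (erule measurable_compose) (intro borel_measurable_continuous_onI continuous_intros)

lemma bounded_meas_integrable:
  fixes g :: "real \<Rightarrow> 'b::euclidean_space"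
  assumes "g \<in> borel_measurable (lebesgue_on {a..b})" "\<And>s. s \<in> {a..b} \<Longrightarrow> norm (g s) \<le> B"
  shows "g integrable_on {a..b}"
  by (rule measurable_bounded_by_integrable_imp_integrable[OF assms(1) integrable_const_ivl[of B] assms(2)]) auto

lemma integrable_mult_real: "g integrable_on S \<Longrightarrow> (\<lambda>x. c * g x) integrable_on S" for g :: "real \<Rightarrow> real"
  using integrable_cmul[of g S c] by simp

locale vf =
  fixes T :: real and f0 :: "real^'p \<Rightarrow> real^'n \<Rightarrow> real^'n"
    and f :: "'m::finite \<Rightarrow> real^'p \<Rightarrow> real^'n \<Rightarrow> real^'n" and \<theta> :: "real^'p"
  assumes T: "0 < T"
    and cont0: "continuous_on UNIV (f0 \<theta>)" and contF: "\<And>i. continuous_on UNIV (f i \<theta>)"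
    and lipR: "\<And>R. \<exists>L. \<forall>x y. norm x \<le> R \<longrightarrow> norm y \<le> R \<longrightarrow>
        norm (f0 \<theta> x - f0 \<theta> y) \<le> L * norm (x - y) \<and> (\<forall>i. norm (f i \<theta> x - f i \<theta> y) \<le> L * norm (x - y))"
    and growth: "\<exists>c. \<forall>x. norm (f0 \<theta> x) \<le> c * (1 + norm x) \<and> (\<forall>i. norm (f i \<theta> x) \<le> c * (1 + norm x))"
begin

lemma fctrl_meas:
  assumes u: "u \<in> borel_measurable (lebesgue_on {0..T})" and y: "continuous_on {0..T} y"
  shows "(\<lambda>s. fctrl f0 f \<theta> (u s) (y s)) \<in> borel_measurable (lebesgue_on {0..T})"
proof -
  have ym: "y \<in> borel_measurable (lebesgue_on {0..T})"
    by (rule continuous_imp_measurable_on_sets_lebesgue[OF y]) auto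
  have c0: "(\<lambda>s. f0 \<theta> (y s)) \<in> borel_measurable (lebesgue_on {0..T})"
    by (rule measurable_compose[OF ym borel_measurable_continuous_onI[OF cont0]])
  have ci: "(\<lambda>s. f i \<theta> (y s)) \<in> borel_measurable (lebesgue_on {0..T})" for i
    by (rule measurable_compose[OF ym borel_measurable_continuous_onI[OF contF]])
  show ?thesis
    unfolding fctrl_def
    by (intro borel_measurable_add borel_measurable_sum borel_measurable_scaleR c0 ci meas_nth u)
qed

lemma growth_ball: "\<exists>M\<ge>0. \<forall>x. norm x \<le> R \<longrightarrow> norm (f0 \<theta> x) \<le> M \<and> (\<forall>i. norm (f i \<theta> x) \<le> M)"
proof -
  obtain c where c: "\<And>x. norm (f0 \<theta> x) \<le> c * (1 + norm x) \<and> (\<forall>i. norm (f i \<theta> x) \<le> c * (1 + norm x))"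
    using growth by blast
  have c0: "0 \<le> c" using c[of 0] by (auto intro: order_trans[OF norm_ge_zero])
  show ?thesis
  proof (intro exI[of _ "c * (1 + max R 0)"] conjI allI impI)
    show "0 \<le> c * (1 + max R 0)" using c0 by simp
  next
    fix x :: "real^'n" assume x: "norm x \<le> R"
    have "c * (1 + norm x) \<le> c * (1 + max R 0)" using c0 x by (intro mult_left_mono) auto
    then show "norm (f0 \<theta> x) \<le> c * (1 + max R 0)"
      using c[of x] by (auto intro: order_trans)
  next
    fix x :: "real^'n" and i assume x: "norm x \<le> R"
    have "c * (1 + norm x) \<le> c * (1 + max R 0)" using c0 x by (intro mult_left_mono) auto
    then show "norm (f i \<theta> x) \<le> c * (1 + max R 0)"
      using c[of x] by (auto intro: order_trans)
  qed
qed

lemma fctrl_bound: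
  assumes w: "\<And>i. \<bar>w $ i\<bar> \<le> 1" and M: "norm (f0 \<theta> x) \<le> M" "\<And>i. norm (f i \<theta> x) \<le> M"
  shows "norm (fctrl f0 f \<theta> w x) \<le> (1 + real CARD('m)) * M"
proof -
  have "norm (fctrl f0 f \<theta> w x) \<le> norm (f0 \<theta> x) + (\<Sum>i\<in>UNIV. norm ((w $ i) *\<^sub>R f i \<theta> x))"
    unfolding fctrl_def by (intro order_trans[OF norm_triangle_ineq] add_left_mono norm_sum)
  also have "\<dots> \<le> M + (\<Sum>i\<in>(UNIV::'m set). M)"
  proof (intro add_mono M sum_mono)
    fix i
    have "norm ((w $ i) *\<^sub>R f i \<theta> x) = \<bar>w $ i\<bar> * norm (f i \<theta> x)" by simp
    also have "\<dots> \<le> 1 * M" using w[of i] M(2)[of i] by (intro mult_mono) auto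
    finally show "norm ((w $ i) *\<^sub>R f i \<theta> x) \<le> M" by simp
  qed
  finally show ?thesis by (simp add: algebra_simps)
qed

lemma fctrl_integrable:
  assumes u: "u \<in> Uad T" and y: "continuous_on {0..T} y"
  shows "(\<lambda>s. fctrl f0 f \<theta> (u s) (y s)) integrable_on {0..T}"
proof -
  have "compact (y ` {0..T})" by (rule compact_continuous_image[OF y]) auto
  then obtain R where R: "\<And>s. s \<in> {0..T} \<Longrightarrow> norm (y s) \<le> R"
    by (meson bounded_iff compact_imp_bounded imageI)
  obtain M where M: "\<And>x. norm x \<le> R \<Longrightarrow> norm (f0 \<theta> x) \<le> M \<and> (\<forall>i. norm (f i \<theta> x) \<le> M)"
    using growth_ball[of R] by blast
  show ?thesis
  proof (rule bounded_meas_integrable)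
    show "(\<lambda>s. fctrl f0 f \<theta> (u s) (y s)) \<in> borel_measurable (lebesgue_on {0..T})"
      by (rule fctrl_meas[OF Uad_meas[OF u] y])
    fix s assume s: "s \<in> {0..T}"
    show "norm (fctrl f0 f \<theta> (u s) (y s)) \<le> (1 + real CARD('m)) * M"
      using u s M[OF R[OF s]] unfolding Uad_def by (intro fctrl_bound) auto
  qed
qed

lemma fctrl_diff:
  "\<exists>L M. 0 \<le> L \<and> 0 \<le> M \<and> (\<forall>w w' x y. (\<forall>i. \<bar>w $ i\<bar> \<le> 1) \<longrightarrow> norm x \<le> R \<longrightarrow> norm y \<le> R \<longrightarrow>
      norm (fctrl f0 f \<theta> w x - fctrl f0 f \<theta> w' y) \<le> L * norm (x - y) + M * norm (w - w'))"
proof -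
  obtain L0 where L0: "\<And>x y. norm x \<le> R \<Longrightarrow> norm y \<le> R \<Longrightarrow>
        norm (f0 \<theta> x - f0 \<theta> y) \<le> L0 * norm (x - y) \<and> (\<forall>i. norm (f i \<theta> x - f i \<theta> y) \<le> L0 * norm (x - y))"
    using lipR[of R] by blast
  define L where "L = max L0 0"
  have L: "norm (f0 \<theta> x - f0 \<theta> y) \<le> L * norm (x - y)" "norm (f i \<theta> x - f i \<theta> y) \<le> L * norm (x - y)"
    if "norm x \<le> R" "norm y \<le> R" for x y i
    using L0[OF that] unfolding L_def
    by (meson max.cobounded1 mult_right_mono norm_ge_zero order_trans)+
  obtain M where M: "M \<ge> 0" "\<And>x. norm x \<le> R \<Longrightarrow> norm (f0 \<theta> x) \<le> M \<and> (\<forall>i. norm (f i \<theta> x) \<le> M)"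
    using growth_ball[of R] by blast
  have main: "norm (fctrl f0 f \<theta> w x - fctrl f0 f \<theta> w' y)
        \<le> (1 + real CARD('m)) * L * norm (x - y) + real CARD('m) * M * norm (w - w')"
    if w: "\<forall>i. \<bar>w $ i\<bar> \<le> 1" and x: "norm x \<le> R" and y: "norm y \<le> R" for w w' :: "real^'m" and x y :: "real^'n"
  proof -
    have eq: "fctrl f0 f \<theta> w x - fctrl f0 f \<theta> w' y = (f0 \<theta> x - f0 \<theta> y)
        + (\<Sum>i\<in>UNIV. (w $ i) *\<^sub>R (f i \<theta> x - f i \<theta> y)) + (\<Sum>i\<in>UNIV. (w $ i - w' $ i) *\<^sub>R f i \<theta> y)"
      unfolding fctrl_def by (simp add: algebra_simps sum.distrib sum_subtractf)
    have n1: "norm (\<Sum>i\<in>UNIV. (w $ i) *\<^sub>R (f i \<theta> x - f i \<theta> y)) \<le> (\<Sum>i\<in>(UNIV::'m set). L * norm (x - y))"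
    proof (intro order_trans[OF norm_sum] sum_mono)
      fix i
      have "norm ((w $ i) *\<^sub>R (f i \<theta> x - f i \<theta> y)) = \<bar>w $ i\<bar> * norm (f i \<theta> x - f i \<theta> y)" by simp
      also have "\<dots> \<le> 1 * (L * norm (x - y))" using w L(2)[OF x y, of i] by (intro mult_mono) auto
      finally show "norm ((w $ i) *\<^sub>R (f i \<theta> x - f i \<theta> y)) \<le> L * norm (x - y)" by simp
    qed
    have n2: "norm (\<Sum>i\<in>UNIV. (w $ i - w' $ i) *\<^sub>R f i \<theta> y) \<le> (\<Sum>i\<in>(UNIV::'m set). M * norm (w - w'))"
    proof (intro order_trans[OF norm_sum] sum_mono)
      fix i
      have "norm ((w $ i - w' $ i) *\<^sub>R f i \<theta> y) = \<bar>(w - w') $ i\<bar> * norm (f i \<theta> y)" by simp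
      also have "\<dots> \<le> norm (w - w') * M" using M(2)[OF y] by (intro mult_mono component_le_norm_cart) auto
      finally show "norm ((w $ i - w' $ i) *\<^sub>R f i \<theta> y) \<le> M * norm (w - w')" by (simp add: mult.commute)
    qed
    have "norm (fctrl f0 f \<theta> w x - fctrl f0 f \<theta> w' y) \<le> L * norm (x - y)
        + (\<Sum>i\<in>(UNIV::'m set). L * norm (x - y)) + (\<Sum>i\<in>(UNIV::'m set). M * norm (w - w'))"
      unfolding eq by (intro order_trans[OF norm_triangle_ineq] add_mono order_trans[OF norm_triangle_ineq] L(1)[OF x y] n1 n2)
    also have "\<dots> = (1 + real CARD('m)) * L * norm (x - y) + real CARD('m) * M * norm (w - w')"
      by (simp add: algebra_simps)
    finally show "norm (fctrl f0 f \<theta> w x - fctrl f0 f \<theta> w' y)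
        \<le> (1 + real CARD('m)) * L * norm (x - y) + real CARD('m) * M * norm (w - w')" .
  qed
  show ?thesis
    apply (rule exI[of _ "(1 + real CARD('m)) * L"])
    apply (rule exI[of _ "real CARD('m) * M"])
    using main M(1) by (auto simp: L_def)
qed

lemma udiff_integrable:
  fixes u v :: "real \<Rightarrow> real^'m"
  assumes "u \<in> Uad T" "v \<in> Uad T"
  shows "(\<lambda>s. norm (u s - v s)) integrable_on {0..T}"
proof (rule bounded_meas_integrable)
  show "(\<lambda>s. norm (u s - v s)) \<in> borel_measurable (lebesgue_on {0..T})"
    using Uad_meas[OF assms(1)] Uad_meas[OF assms(2)] by measurable
  fix s assume s: "s \<in> {0..T}"
  have "norm (norm (u s - v s)) \<le> norm (u s) + norm (v s)" by (simp add: norm_triangle_ineq4)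
  also have "\<dots> \<le> real CARD('m) + real CARD('m)" using Uad_bound[OF assms(1) s] Uad_bound[OF assms(2) s] by simp
  finally show "norm (norm (u s - v s)) \<le> real CARD('m) + real CARD('m)" .
qed

lemma stability:
  "\<exists>C\<ge>0. \<forall>u v x y. u \<in> Uad T \<longrightarrow> v \<in> Uad T \<longrightarrow> sol T f0 f u \<theta> x \<longrightarrow> sol T f0 f v \<theta> y \<longrightarrow>
      (\<forall>t\<in>{0..T}. norm (x t) \<le> R \<and> norm (y t) \<le> R) \<longrightarrow>
      (\<forall>t\<in>{0..T}. norm (x t - y t) \<le> C * integral {0..T} (\<lambda>s. norm (u s - v s)))"
proof -
  obtain L M where LM: "0 \<le> L" "0 \<le> M" and
    lm: "\<And>w w' x y. (\<forall>i. \<bar>w $ i\<bar> \<le> 1) \<Longrightarrow> norm x \<le> R \<Longrightarrow> norm y \<le> R \<Longrightarrow>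
      norm (fctrl f0 f \<theta> w x - fctrl f0 f \<theta> w' y) \<le> L * norm (x - y) + M * norm (w - w')"
    using fctrl_diff[of R] by blast
  show ?thesis
  proof (intro exI[of _ "M * exp (L * T)"] conjI allI impI ballI)
    show "0 \<le> M * exp (L * T)" using LM by simp
    fix u v x y t
    assume u: "u \<in> Uad T" and v: "v \<in> Uad T" and sx: "sol T f0 f u \<theta> x" and sy: "sol T f0 f v \<theta> y"
      and R: "\<forall>t\<in>{0..T}. norm (x t) \<le> R \<and> norm (y t) \<le> R" and t: "t \<in> {0..T}"
    define \<epsilon> where "\<epsilon> = M * integral {0..T} (\<lambda>s. norm (u s - v s))"
    have xc: "continuous_on {0..T} x" and yc: "continuous_on {0..T} y" using sx sy by (auto simp: sol_def)
    have \<phi>c: "continuous_on {0..T} (\<lambda>s. norm (x s - y s))" by (intro continuous_intros xc yc)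
    have nuint: "(\<lambda>s. norm (u s - v s)) integrable_on {0..T}" by (rule udiff_integrable[OF u v])
    have nunn: "0 \<le> integral {0..T} (\<lambda>s. norm (u s - v s))" by (rule integral_nonneg[OF nuint]) auto
    have main: "norm (x r - y r) \<le> \<epsilon> + L * integral {0..r} (\<lambda>s. norm (x s - y s))" if r: "r \<in> {0..T}" for r
    proof -
      have sub: "{0..r} \<subseteq> {0..T}" using r by auto
      have hx: "((\<lambda>s. fctrl f0 f \<theta> (u s) (x s)) has_integral x r) {0..r}" using sx r by (auto simp: sol_def)
      have hy: "((\<lambda>s. fctrl f0 f \<theta> (v s) (y s)) has_integral y r) {0..r}" using sy r by (auto simp: sol_def)
      have "x r - y r = integral {0..r} (\<lambda>s. fctrl f0 f \<theta> (u s) (x s) - fctrl f0 f \<theta> (v s) (y s))"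
        using has_integral_diff[OF hx hy] by (simp add: integral_unique)
      then have "norm (x r - y r) = norm (integral {0..r} (\<lambda>s. fctrl f0 f \<theta> (u s) (x s) - fctrl f0 f \<theta> (v s) (y s)))"
        by simp
      also have "\<dots> \<le> integral {0..r} (\<lambda>s. L * norm (x s - y s) + M * norm (u s - v s))"
      proof (rule integral_norm_bound_integral)
        show "(\<lambda>s. fctrl f0 f \<theta> (u s) (x s) - fctrl f0 f \<theta> (v s) (y s)) integrable_on {0..r}"
          using hx hy by (intro integrable_diff) auto
        show "(\<lambda>s. L * norm (x s - y s) + M * norm (u s - v s)) integrable_on {0..r}"
          using integrable_on_subinterval[OF nuint sub] integrable_continuous_interval[OF continuous_on_subset[OF \<phi>c sub]]
          by (intro integrable_add integrable_mult_real) auto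
        fix s assume s: "s \<in> {0..r}"
        then have s': "s \<in> {0..T}" using sub by auto
        show "norm (fctrl f0 f \<theta> (u s) (x s) - fctrl f0 f \<theta> (v s) (y s)) \<le> L * norm (x s - y s) + M * norm (u s - v s)"
          using u s' R by (intro lm) (auto simp: Uad_def)
      qed
      also have "\<dots> = L * integral {0..r} (\<lambda>s. norm (x s - y s)) + M * integral {0..r} (\<lambda>s. norm (u s - v s))"
        using integrable_on_subinterval[OF nuint sub] integrable_continuous_interval[OF continuous_on_subset[OF \<phi>c sub]]
        by (simp add: integral_add integrable_mult_real)
      also have "\<dots> \<le> L * integral {0..r} (\<lambda>s. norm (x s - y s)) + \<epsilon>"
        unfolding \<epsilon>_def using LM
        by (intro add_left_mono mult_left_mono integral_subset_le sub integrable_on_subinterval[OF nuint sub] nuint) auto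
      finally show ?thesis by simp
    qed
    have "norm (x t - y t) \<le> \<epsilon> * exp (L * t)"
      by (rule gronwall[OF \<phi>c LM(1) main t])
    also have "\<dots> \<le> \<epsilon> * exp (L * T)"
      unfolding \<epsilon>_def using LM nunn t by (intro mult_left_mono) (auto intro: mult_left_mono)
    finally show "norm (x t - y t) \<le> M * exp (L * T) * integral {0..T} (\<lambda>s. norm (u s - v s))"
      by (simp add: \<epsilon>_def algebra_simps)
  qed
qed

lemma sol_bounded:
  assumes "sol T f0 f u \<theta> x"
  obtains R where "\<And>t. t \<in> {0..T} \<Longrightarrow> norm (x t) \<le> R"
proof -
  have "compact (x ` {0..T})" by (rule compact_continuous_image) (use assms in \<open>auto simp: sol_def\<close>)
  then show ?thesis using that by (meson bounded_iff compact_imp_bounded imageI)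
qed

lemma sol_unique:
  assumes u: "u \<in> Uad T" and sx: "sol T f0 f u \<theta> x" and sy: "sol T f0 f u \<theta> y"
  shows "x = y"
proof
  fix t
  obtain R1 where R1: "\<And>t. t \<in> {0..T} \<Longrightarrow> norm (x t) \<le> R1" using sol_bounded[OF sx] by blast
  obtain R2 where R2: "\<And>t. t \<in> {0..T} \<Longrightarrow> norm (y t) \<le> R2" using sol_bounded[OF sy] by blast
  obtain C where C: "\<forall>u v x y. u \<in> Uad T \<longrightarrow> v \<in> Uad T \<longrightarrow> sol T f0 f u \<theta> x \<longrightarrow> sol T f0 f v \<theta> y \<longrightarrow>
      (\<forall>t\<in>{0..T}. norm (x t) \<le> max R1 R2 \<and> norm (y t) \<le> max R1 R2) \<longrightarrow>
      (\<forall>t\<in>{0..T}. norm (x t - y t) \<le> C * integral {0..T} (\<lambda>s. norm (u s - v s)))"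
    using stability[of "max R1 R2"] by blast
  have "\<forall>t\<in>{0..T}. norm (x t - y t) \<le> C * integral {0..T} (\<lambda>s. norm (u s - u s))"
    using C u sx sy R1 R2 by (meson max.coboundedI1 max.coboundedI2)
  then have "\<forall>t\<in>{0..T}. x t = y t" by simp
  then show "x t = y t" using sx sy by (cases "t \<in> {0..T}") (auto simp: sol_def)
qed


lemma sol_exists:
  assumes u: "u \<in> Uad T"
  shows "\<exists>x. sol T f0 f u \<theta> x"
proof -
  obtain c where c: "\<And>x. norm (f0 \<theta> x) \<le> c * (1 + norm x) \<and> (\<forall>i. norm (f i \<theta> x) \<le> c * (1 + norm x))"
    using growth by blast
  have c0: "0 \<le> c" using c[of 0] by (auto intro: order_trans[OF norm_ge_zero])
  define K where "K = (1 + real CARD('m)) * c"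
  have K0: "0 \<le> K" using c0 by (simp add: K_def)
  have gr: "norm (fctrl f0 f \<theta> (u s) z) \<le> K * (1 + norm z)" if s: "s \<in> {0..T}" for s z
  proof -
    have "norm (fctrl f0 f \<theta> (u s) z) \<le> (1 + real CARD('m)) * (c * (1 + norm z))"
      using u s c[of z] by (intro fctrl_bound) (auto simp: Uad_def)
    then show ?thesis by (simp add: K_def algebra_simps)
  qed
  define R where "R = exp (K * T)"
  define \<pi> where "\<pi> = closest_point (cball (0::real^'n) R)"
  have R0: "0 \<le> R" by (simp add: R_def)
  have cb: "convex (cball (0::real^'n) R)" "closed (cball (0::real^'n) R)" "cball (0::real^'n) R \<noteq> {}"
    using R0 by auto
  have \<pi>lip: "norm (\<pi> z - \<pi> z') \<le> norm (z - z')" for z z'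
    using closest_point_lipschitz[OF cb, of z z'] by (simp add: \<pi>_def dist_norm)
  have \<pi>in: "norm (\<pi> z) \<le> R" for z
    using closest_point_in_set[OF cb(2,3), of z] by (simp add: \<pi>_def)
  have \<pi>0: "\<pi> 0 = 0" unfolding \<pi>_def using R0 by (intro closest_point_self) auto
  have \<pi>le: "norm (\<pi> z) \<le> norm z" for z using \<pi>lip[of z 0] \<pi>0 by simp
  have \<pi>id: "norm z \<le> R \<Longrightarrow> \<pi> z = z" for z unfolding \<pi>_def by (intro closest_point_self) auto
  have \<pi>c: "continuous_on UNIV \<pi>" unfolding \<pi>_def by (rule continuous_on_closest_point[OF cb])
  obtain L M where LM: "0 \<le> L" "0 \<le> M" and
    lm: "\<And>w w' x y. (\<forall>i. \<bar>w $ i\<bar> \<le> 1) \<Longrightarrow> norm x \<le> R \<Longrightarrow> norm y \<le> R \<Longrightarrow>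
      norm (fctrl f0 f \<theta> w x - fctrl f0 f \<theta> w' y) \<le> L * norm (x - y) + M * norm (w - w')"
    using fctrl_diff[of R] by blast
  obtain M0 where M0: "M0 \<ge> 0" "\<And>x. norm x \<le> R \<Longrightarrow> norm (f0 \<theta> x) \<le> M0 \<and> (\<forall>i. norm (f i \<theta> x) \<le> M0)"
    using growth_ball[of R] by blast
  define G where "G s z = fctrl f0 f \<theta> (u s) (\<pi> z)" for s z
  have "\<exists>x. continuous_on {0..T} x \<and> (\<forall>t\<in>{0..T}. ((\<lambda>s. G s (x s)) has_integral x t) {0..t})"
  proof (rule picard_exists[of T L])
    show "0 \<le> T" using T by simp
    show "0 \<le> L" by fact
    fix y :: "real \<Rightarrow> real^'n" assume "continuous_on {0..T} y"
    then have "continuous_on {0..T} (\<lambda>s. \<pi> (y s))"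
      by (intro continuous_on_compose2[OF \<pi>c]) auto
    then show "(\<lambda>s. G s (y s)) integrable_on {0..T}"
      unfolding G_def by (rule fctrl_integrable[OF u])
  next
    fix s z z' assume s: "s \<in> {0..T}"
    have "norm (G s z - G s z') \<le> L * norm (\<pi> z - \<pi> z') + M * norm (u s - u s)"
      unfolding G_def using u s by (intro lm \<pi>in) (auto simp: Uad_def)
    also have "\<dots> \<le> L * norm (z - z')" using LM \<pi>lip by (simp add: mult_left_mono)
    finally show "norm (G s z - G s z') \<le> L * norm (z - z')" .
  next
    fix s z assume s: "s \<in> {0..T}"
    show "norm (G s z) \<le> (1 + real CARD('m)) * M0"
      unfolding G_def using u s M0(2)[OF \<pi>in] by (intro fctrl_bound) (auto simp: Uad_def)
  qed
  then obtain x0 where x0c: "continuous_on {0..T} x0"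
    and x0i: "\<And>t. t \<in> {0..T} \<Longrightarrow> ((\<lambda>s. G s (x0 s)) has_integral x0 t) {0..t}" by blast
  have \<phi>c: "continuous_on {0..T} (\<lambda>s. 1 + norm (x0 s))" by (intro continuous_intros x0c)
  have bnd: "1 + norm (x0 t) \<le> 1 * exp (K * t)" if t: "t \<in> {0..T}" for t
  proof (rule gronwall[OF \<phi>c K0 _ t])
    fix r assume r: "r \<in> {0..T}"
    have sub: "{0..r} \<subseteq> {0..T}" using r by auto
    have ic: "(\<lambda>s. 1 + norm (x0 s)) integrable_on {0..r}"
      by (rule integrable_continuous_interval[OF continuous_on_subset[OF \<phi>c sub]])
    have "norm (x0 r) = norm (integral {0..r} (\<lambda>s. G s (x0 s)))" using x0i[OF r] by (simp add: integral_unique)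
    also have "\<dots> \<le> integral {0..r} (\<lambda>s. K * (1 + norm (x0 s)))"
    proof (rule integral_norm_bound_integral)
      show "(\<lambda>s. G s (x0 s)) integrable_on {0..r}" using x0i[OF r] by auto
      show "(\<lambda>s. K * (1 + norm (x0 s))) integrable_on {0..r}" using ic by (rule integrable_mult_real)
      fix s assume s: "s \<in> {0..r}"
      then have s': "s \<in> {0..T}" using sub by auto
      have "norm (G s (x0 s)) \<le> K * (1 + norm (\<pi> (x0 s)))" unfolding G_def by (rule gr[OF s'])
      also have "\<dots> \<le> K * (1 + norm (x0 s))" using K0 \<pi>le by (intro mult_left_mono) auto
      finally show "norm (G s (x0 s)) \<le> K * (1 + norm (x0 s))" .
    qed
    also have "\<dots> = K * integral {0..r} (\<lambda>s. 1 + norm (x0 s))" using ic by simp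
    finally show "1 + norm (x0 r) \<le> 1 + K * integral {0..r} (\<lambda>s. 1 + norm (x0 s))" by simp
  qed
  have x0R: "norm (x0 t) \<le> R" if t: "t \<in> {0..T}" for t
  proof -
    have "K * t \<le> K * T" using t K0 by (auto intro: mult_left_mono)
    then have e: "exp (K * t) \<le> exp (K * T)" by simp
    show ?thesis using bnd[OF t] e unfolding R_def by linarith
  qed
  define x where "x t = (if t \<in> {0..T} then x0 t else 0)" for t
  have "sol T f0 f u \<theta> x"
    unfolding sol_def
  proof (intro conjI ballI allI impI)
    show "continuous_on {0..T} x" using x0c by (rule continuous_on_eq) (simp add: x_def)
  next
    fix t assume t: "t \<in> {0..T}"
    have xt: "x t = x0 t" using t by (simp add: x_def)
    show "((\<lambda>s. fctrl f0 f \<theta> (u s) (x s)) has_integral x t) {0..t}"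
      unfolding xt
    proof (rule has_integral_eq[OF _ x0i[OF t]])
      fix s assume s: "s \<in> {0..t}"
      then have s': "s \<in> {0..T}" using t by auto
      show "G s (x0 s) = fctrl f0 f \<theta> (u s) (x s)"
        unfolding G_def x_def using s' \<pi>id[OF x0R[OF s']] by simp
    qed
  next
    fix t assume "t \<notin> {0..T}"
    then show "x t = 0" unfolding x_def by auto
  qed
  then show ?thesis by blast
qed

lemma traj_sol:
  assumes u: "u \<in> Uad T"
  shows "sol T f0 f u \<theta> (traj T f0 f u \<theta>)"
proof -
  have "\<exists>!x. sol T f0 f u \<theta> x" using sol_exists[OF u] sol_unique[OF u] by blast
  then show ?thesis unfolding traj_sol_def by (rule theI')
qed

end


lemma smooth_cont:
  fixes g :: "'a::euclidean_space \<times> 'b::euclidean_space \<Rightarrow> 'c::real_normed_vector"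
  assumes "smooth g"
  shows "continuous_on UNIV (\<lambda>x. g (\<theta>, x))"
proof -
  have "Ck 0 g" using assms by (simp add: smooth_def)
  then have c: "continuous_on UNIV g" by simp
  show ?thesis by (rule continuous_on_compose2[OF c]) (auto intro: continuous_intros)
qed

lemma smooth_lip:
  fixes g :: "'a::euclidean_space \<times> 'b::euclidean_space \<Rightarrow> 'c::euclidean_space"
  assumes "smooth g"
  shows "\<exists>L. \<forall>x y. norm x \<le> R \<longrightarrow> norm y \<le> R \<longrightarrow> norm (g (\<theta>, x) - g (\<theta>, y)) \<le> L * norm (x - y)"
proof -
  have "Ck 1 g" using assms by (simp add: smooth_def)
  then have dif: "\<And>z. g differentiable (at z)"
    and pc: "\<And>e. e \<in> Basis \<Longrightarrow> continuous_on UNIV (\<lambda>z. frechet_derivative g (at z) e)"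
    by auto
  define D where "D z = frechet_derivative g (at z)" for z
  have gD: "(g has_derivative D z) (at z)" for z
    using dif[of z] unfolding D_def by (simp add: frechet_derivative_works)
  have blD: "bounded_linear (D z)" for z by (rule has_derivative_bounded_linear[OF gD])
  define S where "S = (\<lambda>x. (\<theta>, x)) ` cball (0::'b) R"
  have Sc: "compact S" unfolding S_def
    by (intro compact_continuous_image) (auto intro: continuous_intros)
  have "\<exists>B. \<forall>z\<in>S. norm (D z (0, e)) \<le> B" if e: "e \<in> Basis" for e
  proof -
    have "(0, e) \<in> (Basis :: ('a \<times> 'b) set)" using e by (simp add: Basis_prod_def)
    then have "continuous_on S (\<lambda>z. D z (0, e))"
      unfolding D_def using pc by (meson continuous_on_subset subset_UNIV)
    then have "compact ((\<lambda>z. D z (0, e)) ` S)" by (rule compact_continuous_image[OF _ Sc])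
    then show ?thesis by (meson bounded_iff compact_imp_bounded imageI)
  qed
  then obtain Bf where Bf: "\<And>e z. e \<in> Basis \<Longrightarrow> z \<in> S \<Longrightarrow> norm (D z (0, e)) \<le> Bf e" by metis
  define B where "B = (\<Sum>e\<in>Basis. Bf e)"
  define ell where "ell x v = D (\<theta>, x) (0, v)" for x v
  have hd: "((\<lambda>x. g (\<theta>, x)) has_derivative ell x) (at x within cball 0 R)" for x
  proof -
    have "((\<lambda>x. (\<theta>, x)) has_derivative (\<lambda>v. (0, v))) (at x within cball 0 R)"
      by (intro has_derivative_Pair has_derivative_const has_derivative_ident)
    from has_derivative_compose[OF this gD]
    show ?thesis unfolding ell_def .
  qed
  have lin: "linear (ell x)" for x
  proof -
    have "bounded_linear (\<lambda>v. (0::'a, v))" by (intro bounded_linear_Pair bounded_linear_zero bounded_linear_ident)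
    from bounded_linear_compose[OF blD this, of "(\<theta>, x)"]
    show ?thesis unfolding ell_def by (rule bounded_linear.linear)
  qed
  have on: "onorm (ell x) \<le> B" if x: "x \<in> cball 0 R" for x
  proof (rule onorm_le)
    fix v :: 'b
    have zS: "(\<theta>, x) \<in> S" using x by (simp add: S_def)
    have "ell x v = ell x (\<Sum>e\<in>Basis. (v \<bullet> e) *\<^sub>R e)" by (simp add: euclidean_representation)
    also have "\<dots> = (\<Sum>e\<in>Basis. (v \<bullet> e) *\<^sub>R ell x e)"
      using lin[of x] by (simp add: linear_sum linear_scale)
    finally have "norm (ell x v) \<le> (\<Sum>e\<in>Basis. norm ((v \<bullet> e) *\<^sub>R ell x e))"
      using norm_sum by metis
    also have "\<dots> \<le> (\<Sum>e\<in>Basis. norm v * Bf e)"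
    proof (rule sum_mono)
      fix e :: 'b assume e: "e \<in> Basis"
      have "norm ((v \<bullet> e) *\<^sub>R ell x e) = \<bar>v \<bullet> e\<bar> * norm (ell x e)" by simp
      also have "\<dots> \<le> norm v * Bf e"
        using Bf[OF e zS] e by (intro mult_mono) (auto simp: ell_def Basis_le_norm)
      finally show "norm ((v \<bullet> e) *\<^sub>R ell x e) \<le> norm v * Bf e" .
    qed
    also have "\<dots> = B * norm v" by (simp add: B_def sum_distrib_left mult.commute)
    finally show "norm (ell x v) \<le> B * norm v" .
  qed
  show ?thesis
  proof (intro exI[of _ B] allI impI)
    fix x y :: 'b assume "norm x \<le> R" "norm y \<le> R"
    then show "norm (g (\<theta>, x) - g (\<theta>, y)) \<le> B * norm (x - y)"
      by (intro differentiable_bound[OF convex_cball hd on]) auto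
  qed
qed


lemma shift_vd:
  fixes g :: "real \<Rightarrow> 'b::real_normed_vector"
  assumes "((\<lambda>\<sigma>. g (\<sigma>0 + \<sigma>)) has_vector_derivative d) (at 0)"
  shows "(g has_vector_derivative d) (at \<sigma>0)"
proof -
  have f: "((\<lambda>\<sigma>. \<sigma> - \<sigma>0) has_vector_derivative 1) (at \<sigma>0)"
    by (rule derivative_eq_intros refl | simp)+
  have "(((\<lambda>\<sigma>. g (\<sigma>0 + \<sigma>)) \<circ> (\<lambda>\<sigma>. \<sigma> - \<sigma>0)) has_vector_derivative 1 *\<^sub>R d) (at \<sigma>0)"
    by (rule vector_diff_chain_at[OF f]) (use assms in simp)
  then show ?thesis by (simp add: o_def)
qed

lemma seg_bound:
  fixes h :: "real^'p \<Rightarrow> 'b::real_normed_vector"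
  assumes dx: "\<And>\<theta>. \<exists>d. ((\<lambda>s. h (\<theta> + s *\<^sub>R axis j 1)) has_vector_derivative d) (at 0) \<and> norm d \<le> b \<theta>"
    and B: "\<And>\<sigma>. \<bar>\<sigma>\<bar> \<le> \<bar>s\<bar> \<Longrightarrow> b (\<zeta> + \<sigma> *\<^sub>R axis j 1) \<le> B"
  shows "norm (h (\<zeta> + s *\<^sub>R axis j 1) - h \<zeta>) \<le> B * \<bar>s\<bar>"
proof -
  define \<phi> where "\<phi> \<sigma> = h (\<zeta> + \<sigma> *\<^sub>R axis j 1)" for \<sigma>
  have der: "\<exists>d. (\<phi> has_vector_derivative d) (at \<sigma>0) \<and> norm d \<le> b (\<zeta> + \<sigma>0 *\<^sub>R axis j 1)" for \<sigma>0
  proof -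
    obtain d where d: "((\<lambda>s. h ((\<zeta> + \<sigma>0 *\<^sub>R axis j 1) + s *\<^sub>R axis j 1)) has_vector_derivative d) (at 0)"
      "norm d \<le> b (\<zeta> + \<sigma>0 *\<^sub>R axis j 1)"
      using dx by blast
    have eq: "(\<lambda>s. h ((\<zeta> + \<sigma>0 *\<^sub>R axis j 1) + s *\<^sub>R axis j 1)) = (\<lambda>s. \<phi> (\<sigma>0 + s))"
      by (simp add: \<phi>_def scaleR_add_left add.assoc)
    have "(\<phi> has_vector_derivative d) (at \<sigma>0)"
      by (rule shift_vd, subst eq[symmetric], rule d(1))
    with d show ?thesis by blast
  qed
  have "\<exists>D. \<forall>\<sigma>. (\<phi> has_vector_derivative D \<sigma>) (at \<sigma>) \<and> norm (D \<sigma>) \<le> b (\<zeta> + \<sigma> *\<^sub>R axis j 1)"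
    by (intro choice allI der)
  then obtain D where D: "\<And>\<sigma>. (\<phi> has_vector_derivative D \<sigma>) (at \<sigma>)" "\<And>\<sigma>. norm (D \<sigma>) \<le> b (\<zeta> + \<sigma> *\<^sub>R axis j 1)"
    by blast
  have segle: "\<bar>\<sigma>\<bar> \<le> \<bar>s\<bar>" if "\<sigma> \<in> closed_segment 0 s" for \<sigma>
    using that by (auto simp: closed_segment_eq_real_ivl split: if_splits)
  have "norm (\<phi> s - \<phi> 0) \<le> B * norm (s - 0)"
  proof (rule differentiable_bound[OF convex_closed_segment, of 0 s \<phi> "\<lambda>\<sigma> x. x *\<^sub>R D \<sigma>"])
    fix \<sigma> assume \<sigma>: "\<sigma> \<in> closed_segment 0 s"
    show "(\<phi> has_derivative (\<lambda>x. x *\<^sub>R D \<sigma>)) (at \<sigma> within closed_segment 0 s)"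
      using D(1)[of \<sigma>] unfolding has_vector_derivative_def by (rule has_derivative_at_withinI)
    show "onorm (\<lambda>x. x *\<^sub>R D \<sigma>) \<le> B"
    proof -
      have "onorm (\<lambda>x. x *\<^sub>R D \<sigma>) = onorm (\<lambda>x::real. x) * norm (D \<sigma>)"
        by (rule onorm_scaleR_left) (rule bounded_linear_ident)
      also have "\<dots> = norm (D \<sigma>)" using onorm_id[where 'a=real] by (simp add: id_def)
      also have "\<dots> \<le> B" using D(2)[of \<sigma>] B[OF segle[OF \<sigma>]] by linarith
      finally show ?thesis .
    qed
  qed auto
  then show ?thesis by (simp add: \<phi>_def)
qed

lemma axis_lip:
  fixes h :: "real^'p \<Rightarrow> 'b::real_normed_vector"
  assumes dx: "\<And>\<theta> i. \<exists>d. ((\<lambda>s. h (\<theta> + s *\<^sub>R axis i 1)) has_vector_derivative d) (at 0) \<and> norm d \<le> b \<theta>"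
    and B: "\<And>\<theta>. dist \<theta> \<theta>0 \<le> real CARD('p) \<Longrightarrow> b \<theta> \<le> B"
    and \<Delta>: "\<And>i. \<bar>(\<theta>' - \<theta>0) $ i\<bar> \<le> 1"
  shows "norm (h \<theta>' - h \<theta>0) \<le> B * (\<Sum>i\<in>UNIV. \<bar>(\<theta>' - \<theta>0) $ i\<bar>)"
proof -
  define \<Delta> where "\<Delta> = \<theta>' - \<theta>0"
  define \<theta>S where "\<theta>S S = \<theta>0 + (\<Sum>i\<in>S. (\<Delta> $ i) *\<^sub>R axis i (1::real))" for S
  have "norm (h (\<theta>S S) - h \<theta>0) \<le> B * (\<Sum>i\<in>S. \<bar>\<Delta> $ i\<bar>)" if "finite S" for S
    using that
  proof (induction S rule: finite_induct)
    case empty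
    then show ?case by (simp add: \<theta>S_def)
  next
    case (insert j S)
    have eq: "\<theta>S (insert j S) = \<theta>S S + (\<Delta> $ j) *\<^sub>R axis j 1"
      unfolding \<theta>S_def using insert(1,2) by (simp add: add.commute add.left_commute)
    have "norm (h (\<theta>S S + (\<Delta> $ j) *\<^sub>R axis j 1) - h (\<theta>S S)) \<le> B * \<bar>\<Delta> $ j\<bar>"
    proof (rule seg_bound[OF dx])
      fix \<sigma> :: real assume \<sigma>: "\<bar>\<sigma>\<bar> \<le> \<bar>\<Delta> $ j\<bar>"
      have "dist (\<theta>S S + \<sigma> *\<^sub>R axis j 1) \<theta>0 = norm ((\<Sum>i\<in>S. (\<Delta> $ i) *\<^sub>R axis i (1::real)) + \<sigma> *\<^sub>R axis j 1)"
        by (simp add: \<theta>S_def dist_norm)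
      also have "\<dots> \<le> (\<Sum>i\<in>S. norm ((\<Delta> $ i) *\<^sub>R axis i (1::real))) + norm (\<sigma> *\<^sub>R axis j (1::real))"
        by (intro order_trans[OF norm_triangle_ineq] add_right_mono norm_sum)
      also have "\<dots> \<le> (\<Sum>i\<in>S. 1) + 1"
      proof (intro add_mono sum_mono)
        fix i show "norm ((\<Delta> $ i) *\<^sub>R axis i (1::real)) \<le> 1" using \<Delta>[of i] by (simp add: \<Delta>_def)
        show "norm (\<sigma> *\<^sub>R axis j (1::real)) \<le> 1" using \<Delta>[of j] \<sigma> by (simp add: \<Delta>_def)
      qed
      also have "\<dots> = real (card (insert j S))" using insert by simp
      also have "\<dots> \<le> real CARD('p)" by (simp add: card_mono)
      finally show "b (\<theta>S S + \<sigma> *\<^sub>R axis j 1) \<le> B" by (rule B)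
    qed
    moreover have "norm (h (\<theta>S (insert j S)) - h \<theta>0) \<le> norm (h (\<theta>S S + (\<Delta> $ j) *\<^sub>R axis j 1) - h (\<theta>S S)) + norm (h (\<theta>S S) - h \<theta>0)"
    proof -
      have "h (\<theta>S (insert j S)) - h \<theta>0 = (h (\<theta>S S + (\<Delta> $ j) *\<^sub>R axis j 1) - h (\<theta>S S)) + (h (\<theta>S S) - h \<theta>0)"
        unfolding eq by simp
      then show ?thesis by (metis norm_triangle_ineq)
    qed
    ultimately have "norm (h (\<theta>S (insert j S)) - h \<theta>0) \<le> B * \<bar>\<Delta> $ j\<bar> + B * (\<Sum>i\<in>S. \<bar>\<Delta> $ i\<bar>)"
      using insert.IH by linarith
    then show ?case using insert by (simp add: algebra_simps)
  qed
  from this[of UNIV]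
  have "norm (h (\<theta>S UNIV) - h \<theta>0) \<le> B * (\<Sum>i\<in>UNIV. \<bar>\<Delta> $ i\<bar>)" by simp
  moreover have "\<theta>S UNIV = \<theta>'"
    using basis_expansion[of \<Delta>] by (simp add: \<theta>S_def \<Delta>_def scalar_mult_eq_scaleR)
  ultimately show ?thesis by (simp add: \<Delta>_def)
qed


lemma fm_interval: "finite_measure (lebesgue_on {a..b::real})"
  by (rule finite_measure_lebesgue_on) auto

lemma int_interval_bounded:
  fixes f :: "real \<Rightarrow> 'b::euclidean_space"
  assumes "f \<in> borel_measurable (lebesgue_on {a..b})" "\<And>t. t \<in> {a..b} \<Longrightarrow> norm (f t) \<le> B"
  shows "integrable (lebesgue_on {a..b}) f"
    and "integral\<^sup>L (lebesgue_on {a..b}) f = integral {a..b} f"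
proof -
  show i: "integrable (lebesgue_on {a..b}) f"
  proof (rule finite_measure.integrable_const_bound[OF fm_interval _ assms(1)])
    show "AE x in lebesgue_on {a..b}. norm (f x) \<le> B"
      by (rule AE_I2) (use assms(2) in auto)
  qed
  show "integral\<^sup>L (lebesgue_on {a..b}) f = integral {a..b} f"
    by (rule lebesgue_integral_eq_integral[OF i]) auto
qed

lemma ae_dct_interval:
  fixes f :: "nat \<Rightarrow> real \<Rightarrow> 'b::euclidean_space"
  assumes fm: "\<And>k. f k \<in> borel_measurable (lebesgue_on {a..b})"
    and fb: "\<And>k t. t \<in> {a..b} \<Longrightarrow> norm (f k t) \<le> B"
    and lim: "AE t in lebesgue_on {a..b}. (\<lambda>k. f k t) \<longlonglongrightarrow> g t"
    and gm: "g \<in> borel_measurable (lebesgue_on {a..b})"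
  shows "(\<lambda>k. integral {a..b} (f k)) \<longlonglongrightarrow> integral {a..b} g"
proof -
  let ?M = "lebesgue_on {a..b}"
  have w: "integrable ?M (\<lambda>t. B)" using finite_measure.integrable_const[OF fm_interval] by blast
  have bd: "AE t in ?M. norm (f k t) \<le> B" for k by (rule AE_I2) (use fb in auto)
  have ig: "integrable ?M g" by (rule integrable_dominated_convergence[OF gm fm w lim bd])
  have conv: "(\<lambda>k. integral\<^sup>L ?M (f k)) \<longlonglongrightarrow> integral\<^sup>L ?M g"
    by (rule integral_dominated_convergence[OF gm fm w lim bd])
  have e1: "integral\<^sup>L ?M (f k) = integral {a..b} (f k)" for k
    using int_interval_bounded[OF fm fb] by blast
  have e2: "integral\<^sup>L ?M g = integral {a..b} g"
    by (rule lebesgue_integral_eq_integral[OF ig]) auto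
  show ?thesis using conv unfolding e1 e2 .
qed

lemma bounded_meas_integrable':
  fixes g :: "real \<Rightarrow> 'b::euclidean_space"
  assumes "g \<in> borel_measurable (lebesgue_on {a..b})" "\<And>s. s \<in> {a..b} \<Longrightarrow> norm (g s) \<le> B"
  shows "g integrable_on {a..b}"
  by (rule bounded_meas_integrable[OF assms])

lemma isCont_lip_at:
  fixes g :: "'a::metric_space \<Rightarrow> real"
  assumes A: "\<And>y. dist y x < 1 \<Longrightarrow> \<bar>g y - g x\<bar> \<le> C * dist y x"
  shows "isCont g x"
proof -
  define C' where "C' = max C 0"
  have C0: "0 \<le> C'" by (simp add: C'_def)
  have A': "\<bar>g y - g x\<bar> \<le> C' * dist y x" if "dist y x < 1" for y
    using A[OF that] unfolding C'_def by (meson max.cobounded1 mult_right_mono order_trans zero_le_dist)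
  show ?thesis
    unfolding isCont_def
  proof (rule tendstoI)
    fix e :: real assume e: "0 < e"
    define d where "d = min 1 (e / (C' + 1))"
    show "\<forall>\<^sub>F y in at x. dist (g y) (g x) < e"
      unfolding eventually_at
    proof (intro exI[of _ d] conjI ballI impI)
      show "0 < d" using e C0 unfolding d_def by (auto intro!: divide_pos_pos)
      fix y assume y: "y \<noteq> x \<and> dist y x < d"
      then have y1: "dist y x < 1" by (simp add: d_def)
      have "\<bar>g y - g x\<bar> \<le> C' * dist y x" using A' y1 by blast
      also have "\<dots> \<le> C' * (e / (C' + 1))" using C0 y by (intro mult_left_mono) (auto simp: d_def)
      also have "\<dots> < e" using C0 e by (simp add: field_simps)
      finally show "dist (g y) (g x) < e" by (simp add: dist_real_def)
    qed
  qed
qed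


locale setting =
  fixes T \<alpha> \<eta> :: real and \<psi> :: "real \<Rightarrow> real^'m"
    and f0 :: "real^'p \<Rightarrow> real^'n \<Rightarrow> real^'n" and f :: "'m \<Rightarrow> real^'p \<Rightarrow> real^'n \<Rightarrow> real^'n"
    and a b :: "real^'p \<Rightarrow> real" and ut :: "real \<Rightarrow> real^'m" and \<mu> :: "(real^'p) measure"
  assumes T_pos: "T > 0" and \<alpha>_pos: "\<alpha> > 0" and \<psi>_cont: "continuous_on {0..T} \<psi>"
    and \<eta>_pos: "\<eta> > 0" and ut_adm: "ut \<in> Uad T"
    and vfa: "\<And>\<theta>. vf T f0 f \<theta>"
    and sets_mu: "sets \<mu> = sets borel"
    and a_L2: "integrable \<mu> (\<lambda>\<theta>. (a \<theta>)\<^sup>2)"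
    and a_loc: "\<And>K. compact K \<Longrightarrow> bounded (a ` K)"
    and b_loc: "\<And>K. compact K \<Longrightarrow> bounded (b ` K)"
    and A2_x: "\<And>u t \<theta>. u \<in> Uad T \<Longrightarrow> t \<in> {0..T} \<Longrightarrow> norm (traj T f0 f u \<theta> t) \<le> a \<theta>"
    and A2_dx: "\<And>u t \<theta> i. u \<in> Uad T \<Longrightarrow> t \<in> {0..T} \<Longrightarrow>
                 \<exists>d. ((\<lambda>s. traj T f0 f u (\<theta> + s *\<^sub>R axis i 1) t) has_vector_derivative d) (at 0)
                     \<and> norm d \<le> b \<theta>"
    and A3: "\<And>u v l. u \<in> Uad T \<Longrightarrow> v \<in> Uad T \<Longrightarrow> l \<in> {0..1} \<Longrightarrow>
               Ecost T f0 f \<mu> (\<lambda>t. l *\<^sub>R u t + (1 - l) *\<^sub>R v t)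
                 \<le> l * Ecost T f0 f \<mu> u + (1 - l) * Ecost T f0 f \<mu> v"
begin

definition gU where "gU u \<theta> = integral {0..T} (\<lambda>t. (norm (traj T f0 f u \<theta> t))\<^sup>2)"

lemma Ecost_gU: "Ecost T f0 f \<mu> u = integral\<^sup>L \<mu> (gU u)"
  unfolding Ecost_def gU_def ..

lemma trajc: "u \<in> Uad T \<Longrightarrow> continuous_on {0..T} (traj T f0 f u \<theta>)"
  using vf.traj_sol[OF vfa] unfolding sol_def by blast

lemma sqint: "u \<in> Uad T \<Longrightarrow> (\<lambda>t. (norm (traj T f0 f u \<theta> t))\<^sup>2) integrable_on {0..T}"
  by (intro integrable_continuous_interval continuous_intros trajc)

lemma sq_diff_le:
  fixes x y :: "'c::real_normed_vector"
  assumes "norm x \<le> A" "norm y \<le> A"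
  shows "\<bar>(norm x)\<^sup>2 - (norm y)\<^sup>2\<bar> \<le> 2 * A * norm (x - y)"
proof -
  have "(norm x)\<^sup>2 - (norm y)\<^sup>2 = (norm x - norm y) * (norm x + norm y)"
    by (simp add: power2_eq_square algebra_simps)
  then have "\<bar>(norm x)\<^sup>2 - (norm y)\<^sup>2\<bar> = \<bar>norm x - norm y\<bar> * (norm x + norm y)"
    by (simp add: abs_mult)
  also have "\<dots> \<le> norm (x - y) * (2 * A)"
    using assms by (intro mult_mono norm_triangle_ineq3) auto
  finally show ?thesis by (simp add: algebra_simps)
qed

lemma gU_cont:
  assumes u: "u \<in> Uad T"
  shows "continuous_on UNIV (gU u)"
proof (rule continuous_at_imp_continuous_on, intro ballI)
  fix \<theta>0 :: "real^'p"
  let ?K = "cball \<theta>0 (real CARD('p))"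
  have "bounded (b ` ?K)" by (rule b_loc) simp
  then obtain B0 where "\<forall>x\<in>b ` ?K. norm x \<le> B0" unfolding bounded_iff by blast
  then have B0: "\<And>\<theta>. \<theta> \<in> ?K \<Longrightarrow> norm (b \<theta>) \<le> B0" by blast
  have "bounded (a ` ?K)" by (rule a_loc) simp
  then obtain A0 where "\<forall>x\<in>a ` ?K. norm x \<le> A0" unfolding bounded_iff by blast
  then have A0: "\<And>\<theta>. \<theta> \<in> ?K \<Longrightarrow> norm (a \<theta>) \<le> A0" by blast
  define B where "B = max B0 0"
  define A where "A = max A0 0"
  have B: "\<And>\<theta>. dist \<theta> \<theta>0 \<le> real CARD('p) \<Longrightarrow> b \<theta> \<le> B"
    using B0 unfolding B_def by (fastforce simp: dist_commute)
  have A: "\<And>\<theta>. \<theta> \<in> ?K \<Longrightarrow> a \<theta> \<le> A" using A0 unfolding A_def by fastforce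
  have B0': "0 \<le> B" "0 \<le> A" by (auto simp: B_def A_def)
  have card1: "1 \<le> real CARD('p)" by simp
  show "isCont (gU u) \<theta>0"
  proof (rule isCont_lip_at[where C = "T * (2 * A * (B * real CARD('p)))"])
    fix \<theta>' assume d: "dist \<theta>' \<theta>0 < 1"
    have "dist \<theta>' \<theta>0 \<le> real CARD('p)" using d card1 by linarith
    then have \<theta>'K: "\<theta>' \<in> ?K" by (simp add: dist_commute)
    have \<theta>0K: "\<theta>0 \<in> ?K" by simp
    have pt: "\<bar>(norm (traj T f0 f u \<theta>' t))\<^sup>2 - (norm (traj T f0 f u \<theta>0 t))\<^sup>2\<bar>
        \<le> 2 * A * (B * real CARD('p) * dist \<theta>' \<theta>0)" if t: "t \<in> {0..T}" for t
    proof -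
      have "norm (traj T f0 f u \<theta>' t - traj T f0 f u \<theta>0 t) \<le> B * (\<Sum>i\<in>UNIV. \<bar>(\<theta>' - \<theta>0) $ i\<bar>)"
      proof (rule axis_lip[where b = b])
        show "\<exists>d. ((\<lambda>s. traj T f0 f u (\<theta> + s *\<^sub>R axis i 1) t) has_vector_derivative d) (at 0) \<and> norm d \<le> b \<theta>"
          for \<theta> i using A2_dx[OF u t] by blast
        show "b \<theta> \<le> B" if "dist \<theta> \<theta>0 \<le> real CARD('p)" for \<theta> using B that by blast
        show "\<bar>(\<theta>' - \<theta>0) $ i\<bar> \<le> 1" for i
          using component_le_norm_cart[of "\<theta>' - \<theta>0" i] d by (simp add: dist_norm)
      qed
      also have "\<dots> \<le> B * (\<Sum>i\<in>(UNIV::'p set). dist \<theta>' \<theta>0)"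
        using B0' component_le_norm_cart[of "\<theta>' - \<theta>0"] by (intro mult_left_mono sum_mono) (auto simp: dist_norm)
      also have "\<dots> = B * real CARD('p) * dist \<theta>' \<theta>0" by simp
      finally have nd: "norm (traj T f0 f u \<theta>' t - traj T f0 f u \<theta>0 t) \<le> B * real CARD('p) * dist \<theta>' \<theta>0" .
      have "norm (traj T f0 f u \<theta>' t) \<le> A" using A2_x[OF u t, of \<theta>'] A[OF \<theta>'K] by linarith
      moreover have "norm (traj T f0 f u \<theta>0 t) \<le> A" using A2_x[OF u t, of \<theta>0] A[OF \<theta>0K] by linarith
      ultimately have "\<bar>(norm (traj T f0 f u \<theta>' t))\<^sup>2 - (norm (traj T f0 f u \<theta>0 t))\<^sup>2\<bar>
          \<le> 2 * A * norm (traj T f0 f u \<theta>' t - traj T f0 f u \<theta>0 t)" by (rule sq_diff_le)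
      also have "\<dots> \<le> 2 * A * (B * real CARD('p) * dist \<theta>' \<theta>0)"
        using nd B0' by (intro mult_left_mono) auto
      finally show ?thesis .
    qed
    have "gU u \<theta>' - gU u \<theta>0 = integral {0..T} (\<lambda>t. (norm (traj T f0 f u \<theta>' t))\<^sup>2 - (norm (traj T f0 f u \<theta>0 t))\<^sup>2)"
      unfolding gU_def by (rule integral_diff[symmetric]) (intro sqint u)+
    moreover have "norm (integral {0..T} (\<lambda>t. (norm (traj T f0 f u \<theta>' t))\<^sup>2 - (norm (traj T f0 f u \<theta>0 t))\<^sup>2))
        \<le> integral {0..T} (\<lambda>t. 2 * A * (B * real CARD('p) * dist \<theta>' \<theta>0))"
      by (rule integral_norm_bound_integral) (auto intro: integrable_diff sqint[OF u] pt)
    ultimately have "\<bar>gU u \<theta>' - gU u \<theta>0\<bar> \<le> integral {0..T} (\<lambda>t. 2 * A * (B * real CARD('p) * dist \<theta>' \<theta>0))"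
      by simp
    also have "\<dots> = T * (2 * A * (B * real CARD('p))) * dist \<theta>' \<theta>0" using T_pos by simp
    finally show "\<bar>gU u \<theta>' - gU u \<theta>0\<bar> \<le> T * (2 * A * (B * real CARD('p))) * dist \<theta>' \<theta>0" .
  qed
qed

lemma gU_meas: "u \<in> Uad T \<Longrightarrow> gU u \<in> borel_measurable \<mu>"
  using borel_measurable_continuous_onI[OF gU_cont] measurable_cong_sets[OF sets_mu refl] by blast

lemma gU_bound:
  assumes u: "u \<in> Uad T"
  shows "0 \<le> gU u \<theta>" "gU u \<theta> \<le> T * (a \<theta>)\<^sup>2"
proof -
  show "0 \<le> gU u \<theta>" unfolding gU_def by (rule integral_nonneg[OF sqint[OF u]]) auto
  have "gU u \<theta> \<le> integral {0..T} (\<lambda>t. (a \<theta>)\<^sup>2)"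
    unfolding gU_def
  proof (rule integral_le[OF sqint[OF u]])
    show "(\<lambda>t. (a \<theta>)\<^sup>2) integrable_on {0..T}" by (rule integrable_const_ivl)
    fix t assume t: "t \<in> {0..T}"
    show "(norm (traj T f0 f u \<theta> t))\<^sup>2 \<le> (a \<theta>)\<^sup>2"
      using A2_x[OF u t] by (intro power_mono) auto
  qed
  then show "gU u \<theta> \<le> T * (a \<theta>)\<^sup>2" using T_pos by simp
qed

lemma Econv:
  assumes u: "\<And>k. u k \<in> Uad T" and ub: "ub \<in> Uad T"
    and L1: "(\<lambda>k. integral {0..T} (\<lambda>s. norm (u k s - ub s))) \<longlonglongrightarrow> 0"
  shows "(\<lambda>k. Ecost T f0 f \<mu> (u k)) \<longlonglongrightarrow> Ecost T f0 f \<mu> ub"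
  unfolding Ecost_gU
proof (rule integral_dominated_convergence[where w = "\<lambda>\<theta>. T * (a \<theta>)\<^sup>2"])
  show "gU ub \<in> borel_measurable \<mu>" by (rule gU_meas[OF ub])
  show "gU (u k) \<in> borel_measurable \<mu>" for k by (rule gU_meas[OF u])
  show "integrable \<mu> (\<lambda>\<theta>. T * (a \<theta>)\<^sup>2)" using a_L2 by simp
  show "AE \<theta> in \<mu>. norm (gU (u k) \<theta>) \<le> T * (a \<theta>)\<^sup>2" for k
    using gU_bound[OF u] by (intro AE_I2) simp
  show "AE \<theta> in \<mu>. (\<lambda>k. gU (u k) \<theta>) \<longlonglongrightarrow> gU ub \<theta>"
  proof (rule AE_I2)
    fix \<theta>
    obtain C where C0: "C \<ge> 0" and C: "\<forall>u v x y. u \<in> Uad T \<longrightarrow> v \<in> Uad T \<longrightarrow> sol T f0 f u \<theta> x \<longrightarrow> sol T f0 f v \<theta> y \<longrightarrow>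
      (\<forall>t\<in>{0..T}. norm (x t) \<le> a \<theta> \<and> norm (y t) \<le> a \<theta>) \<longrightarrow>
      (\<forall>t\<in>{0..T}. norm (x t - y t) \<le> C * integral {0..T} (\<lambda>s. norm (u s - v s)))"
      using vf.stability[OF vfa, of \<theta> "a \<theta>"] by blast
    have bnd: "\<bar>gU (u k) \<theta> - gU ub \<theta>\<bar> \<le> T * (2 * a \<theta> * (C * integral {0..T} (\<lambda>s. norm (u k s - ub s))))" for k
    proof -
      have pt: "\<bar>(norm (traj T f0 f (u k) \<theta> t))\<^sup>2 - (norm (traj T f0 f ub \<theta> t))\<^sup>2\<bar>
          \<le> 2 * a \<theta> * (C * integral {0..T} (\<lambda>s. norm (u k s - ub s)))" if t: "t \<in> {0..T}" for t
      proof -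
        have "\<bar>(norm (traj T f0 f (u k) \<theta> t))\<^sup>2 - (norm (traj T f0 f ub \<theta> t))\<^sup>2\<bar>
            \<le> 2 * a \<theta> * norm (traj T f0 f (u k) \<theta> t - traj T f0 f ub \<theta> t)"
          by (rule sq_diff_le) (intro A2_x u ub t)+
        also have "\<dots> \<le> 2 * a \<theta> * (C * integral {0..T} (\<lambda>s. norm (u k s - ub s)))"
        proof (rule mult_left_mono)
          show "norm (traj T f0 f (u k) \<theta> t - traj T f0 f ub \<theta> t) \<le> C * integral {0..T} (\<lambda>s. norm (u k s - ub s))"
            using C u ub t vf.traj_sol[OF vfa] A2_x by blast
          show "0 \<le> 2 * a \<theta>" using A2_x[OF ub t, of \<theta>] norm_ge_zero[of "traj T f0 f ub \<theta> t"] by linarith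
        qed
        finally show ?thesis .
      qed
      have "gU (u k) \<theta> - gU ub \<theta> = integral {0..T} (\<lambda>t. (norm (traj T f0 f (u k) \<theta> t))\<^sup>2 - (norm (traj T f0 f ub \<theta> t))\<^sup>2)"
        unfolding gU_def by (rule integral_diff[symmetric]) (intro sqint u ub)+
      moreover have "norm (integral {0..T} (\<lambda>t. (norm (traj T f0 f (u k) \<theta> t))\<^sup>2 - (norm (traj T f0 f ub \<theta> t))\<^sup>2))
          \<le> integral {0..T} (\<lambda>t. 2 * a \<theta> * (C * integral {0..T} (\<lambda>s. norm (u k s - ub s))))"
        by (rule integral_norm_bound_integral) (auto intro: integrable_diff sqint[OF u] sqint[OF ub] pt)
      ultimately have "\<bar>gU (u k) \<theta> - gU ub \<theta>\<bar> \<le> integral {0..T} (\<lambda>t. 2 * a \<theta> * (C * integral {0..T} (\<lambda>s. norm (u k s - ub s))))"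
        by simp
      also have "\<dots> = T * (2 * a \<theta> * (C * integral {0..T} (\<lambda>s. norm (u k s - ub s))))" using T_pos by simp
      finally show ?thesis .
    qed
    have z: "(\<lambda>k. T * (2 * a \<theta> * (C * integral {0..T} (\<lambda>s. norm (u k s - ub s))))) \<longlonglongrightarrow> 0"
      using tendsto_mult_right_zero[OF tendsto_mult_right_zero[OF tendsto_mult_right_zero[OF L1]]] by simp
    have "(\<lambda>k. gU (u k) \<theta> - gU ub \<theta>) \<longlonglongrightarrow> 0"
      by (rule Lim_null_comparison[OF _ z]) (use bnd in simp)
    then have "(\<lambda>k. (gU (u k) \<theta> - gU ub \<theta>) + gU ub \<theta>) \<longlonglongrightarrow> 0 + gU ub \<theta>"
      by (intro tendsto_add tendsto_const)
    then show "(\<lambda>k. gU (u k) \<theta>) \<longlonglongrightarrow> gU ub \<theta>" by simp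
  qed
qed

definition J where "J \<nu> u = Jfun T \<alpha> \<psi> f0 f ut \<eta> \<nu> u"
definition Q where "Q u v = integral {0..T} (\<lambda>t. (norm (u t - v t))\<^sup>2)"
definition mid where "mid u v = (\<lambda>t. (1/2::real) *\<^sub>R u t + (1 - 1/2) *\<^sub>R v t)"

lemma J_unfold: "J \<nu> u = - integral {0..T} (\<lambda>t. \<psi> t \<bullet> u t) + \<alpha> * Ecost T f0 f \<nu> u
     + \<eta> / 2 * Q u ut"
  unfolding J_def Jfun_def Q_def ..

lemma psi_bound: "\<exists>M\<ge>0. \<forall>t\<in>{0..T}. norm (\<psi> t) \<le> M"
proof -
  have "compact (\<psi> ` {0..T})" by (rule compact_continuous_image[OF \<psi>_cont]) auto
  then obtain M where "\<forall>x\<in>\<psi> ` {0..T}. norm x \<le> M" using compact_imp_bounded bounded_iff by metis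
  then show ?thesis by (intro exI[of _ "max M 0"]) force
qed

definition M\<psi> where "M\<psi> = (SOME M. M \<ge> 0 \<and> (\<forall>t\<in>{0..T}. norm (\<psi> t) \<le> M))"

lemma M\<psi>: "0 \<le> M\<psi>" "t \<in> {0..T} \<Longrightarrow> norm (\<psi> t) \<le> M\<psi>"
  using someI_ex[OF psi_bound] unfolding M\<psi>_def by auto

lemma psi_meas: "\<psi> \<in> borel_measurable (lebesgue_on {0..T})"
  by (rule continuous_imp_measurable_on_sets_lebesgue[OF \<psi>_cont]) auto

lemma lin_meas: "u \<in> Uad T \<Longrightarrow> (\<lambda>t. \<psi> t \<bullet> u t) \<in> borel_measurable (lebesgue_on {0..T})"
  using psi_meas Uad_meas[of u T] by measurable

lemma lin_bound: "u \<in> Uad T \<Longrightarrow> t \<in> {0..T} \<Longrightarrow> norm (\<psi> t \<bullet> u t) \<le> M\<psi> * real CARD('m)"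
  using Cauchy_Schwarz_ineq2[of "\<psi> t" "u t"] M\<psi> Uad_bound[of u T t]
  by (auto intro!: order_trans[OF _ mult_mono[of "norm (\<psi> t)" M\<psi> "norm (u t)" "real CARD('m)"]])

lemma lin_int: "u \<in> Uad T \<Longrightarrow> (\<lambda>t. \<psi> t \<bullet> u t) integrable_on {0..T}"
  by (rule bounded_meas_integrable[OF lin_meas lin_bound])

lemma sq_meas: "u \<in> Uad T \<Longrightarrow> v \<in> Uad T \<Longrightarrow> (\<lambda>t. (norm (u t - v t))\<^sup>2) \<in> borel_measurable (lebesgue_on {0..T})"
  using Uad_meas[of u T] Uad_meas[of v T] by measurable

lemma diff_bound: "u \<in> Uad T \<Longrightarrow> v \<in> Uad T \<Longrightarrow> t \<in> {0..T} \<Longrightarrow> norm (u t - v t) \<le> 2 * real CARD('m)"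
  for u v :: "real \<Rightarrow> real^'m"
  using norm_triangle_ineq4[of "u t" "v t"] Uad_bound[of u T t] Uad_bound[of v T t] by linarith

lemma sq_bound: "u \<in> Uad T \<Longrightarrow> v \<in> Uad T \<Longrightarrow> t \<in> {0..T} \<Longrightarrow> norm ((norm (u t - v t))\<^sup>2) \<le> (2 * real CARD('m))\<^sup>2"
  for u v :: "real \<Rightarrow> real^'m"
proof -
  assume a: "u \<in> Uad T" "v \<in> Uad T" "t \<in> {0..T}"
  have "(norm (u t - v t))\<^sup>2 \<le> (2 * real CARD('m))\<^sup>2"
    by (rule power_mono[OF diff_bound[OF a] norm_ge_zero])
  then show ?thesis by simp
qed

lemma sq_int: "u \<in> Uad T \<Longrightarrow> v \<in> Uad T \<Longrightarrow> (\<lambda>t. (norm (u t - v t))\<^sup>2) integrable_on {0..T}"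
  for u v :: "real \<Rightarrow> real^'m"
  by (rule bounded_meas_integrable[OF sq_meas sq_bound])

lemma Q_nonneg: "u \<in> Uad T \<Longrightarrow> v \<in> Uad T \<Longrightarrow> 0 \<le> Q u v"
  for u v :: "real \<Rightarrow> real^'m"
  unfolding Q_def by (rule integral_nonneg[OF sq_int]) auto

lemma mid_U: "u \<in> Uad T \<Longrightarrow> v \<in> Uad T \<Longrightarrow> mid u v \<in> Uad T"
  for u v :: "real \<Rightarrow> real^'m"
proof -
  assume u: "u \<in> Uad T" and v: "v \<in> Uad T"
  have m: "mid u v \<in> borel_measurable (lebesgue_on {0..T})"
    unfolding mid_def using Uad_meas[OF u] Uad_meas[OF v] by measurable
  have "\<bar>mid u v t $ i\<bar> \<le> 1" if t: "t \<in> {0..T}" for t i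
  proof -
    have "\<bar>u t $ i\<bar> \<le> 1" "\<bar>v t $ i\<bar> \<le> 1" using u v t unfolding Uad_def by auto
    then show ?thesis unfolding mid_def by simp
  qed
  with m show ?thesis unfolding Uad_def by auto
qed

lemma par_id:
  fixes x y z :: "'c::real_inner"
  shows "(norm ((1/2::real) *\<^sub>R x + (1 - 1/2) *\<^sub>R y - z))\<^sup>2
    = (1/2) * (norm (x - z))\<^sup>2 + (1/2) * (norm (y - z))\<^sup>2 - (1/4) * (norm (x - y))\<^sup>2"
  by (simp add: power2_norm_eq_inner inner_diff_left inner_diff_right inner_add_left inner_add_right
      inner_commute algebra_simps)

lemma strong_conv:
  assumes u: "u \<in> Uad T" and v: "v \<in> Uad T"
  shows "J \<mu> (mid u v) \<le> (J \<mu> u + J \<mu> v) / 2 - \<eta> / 8 * Q u v"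
proof -
  have lin: "integral {0..T} (\<lambda>t. \<psi> t \<bullet> mid u v t)
      = (1/2) * integral {0..T} (\<lambda>t. \<psi> t \<bullet> u t) + (1/2) * integral {0..T} (\<lambda>t. \<psi> t \<bullet> v t)"
  proof -
    have "((\<lambda>t. (1/2) * (\<psi> t \<bullet> u t) + (1/2) * (\<psi> t \<bullet> v t)) has_integral
        (1/2) * integral {0..T} (\<lambda>t. \<psi> t \<bullet> u t) + (1/2) * integral {0..T} (\<lambda>t. \<psi> t \<bullet> v t)) {0..T}"
      by (intro has_integral_add has_integral_mult_right integrable_integral lin_int u v)
    moreover have "(\<lambda>t. (1/2) * (\<psi> t \<bullet> u t) + (1/2) * (\<psi> t \<bullet> v t)) = (\<lambda>t. \<psi> t \<bullet> mid u v t)"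
      unfolding mid_def by (simp add: inner_add_right)
    ultimately show ?thesis by (simp add: integral_unique)
  qed
  have quad: "Q (mid u v) ut = (1/2) * Q u ut + (1/2) * Q v ut - (1/4) * Q u v"
  proof -
    have "((\<lambda>t. (1/2) * (norm (u t - ut t))\<^sup>2 + (1/2) * (norm (v t - ut t))\<^sup>2 - (1/4) * (norm (u t - v t))\<^sup>2) has_integral
        (1/2) * Q u ut + (1/2) * Q v ut - (1/4) * Q u v) {0..T}"
      unfolding Q_def by (intro has_integral_add has_integral_diff has_integral_mult_right integrable_integral sq_int u v ut_adm)
    moreover have "(\<lambda>t. (1/2) * (norm (u t - ut t))\<^sup>2 + (1/2) * (norm (v t - ut t))\<^sup>2 - (1/4) * (norm (u t - v t))\<^sup>2)
        = (\<lambda>t. (norm (mid u v t - ut t))\<^sup>2)"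
      unfolding mid_def by (simp only: par_id)
    ultimately show ?thesis unfolding Q_def by (simp add: integral_unique)
  qed
  have E: "Ecost T f0 f \<mu> (mid u v) \<le> (1/2) * Ecost T f0 f \<mu> u + (1 - 1/2) * Ecost T f0 f \<mu> v"
    unfolding mid_def by (rule A3[OF u v]) auto
  have "\<alpha> * Ecost T f0 f \<mu> (mid u v) \<le> \<alpha> * ((1/2) * Ecost T f0 f \<mu> u + (1 - 1/2) * Ecost T f0 f \<mu> v)"
    using E \<alpha>_pos by (intro mult_left_mono) auto
  then show ?thesis unfolding J_unfold lin quad by (simp add: field_simps)
qed

lemma J_lower: "u \<in> Uad T \<Longrightarrow> - (T * (M\<psi> * real CARD('m))) \<le> J \<mu> u"
proof -
  assume u: "u \<in> Uad T"
  have "norm (integral {0..T} (\<lambda>t. \<psi> t \<bullet> u t)) \<le> integral {0..T} (\<lambda>t. M\<psi> * real CARD('m))"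
    by (rule integral_norm_bound_integral[OF lin_int[OF u] integrable_const_ivl lin_bound[OF u]])
  moreover have "integral {0..T} (\<lambda>t. M\<psi> * real CARD('m)) = T * (M\<psi> * real CARD('m))" using T_pos by simp
  ultimately have l: "integral {0..T} (\<lambda>t. \<psi> t \<bullet> u t) \<le> T * (M\<psi> * real CARD('m))"
    by (metis abs_le_D1 real_norm_def)
  have e: "0 \<le> Ecost T f0 f \<mu> u" unfolding Ecost_gU by (rule integral_nonneg_AE) (use gU_bound[OF u] in simp)
  have q: "0 \<le> Q u ut" by (rule Q_nonneg[OF u ut_adm])
  have "0 \<le> \<alpha> * Ecost T f0 f \<mu> u" using e \<alpha>_pos by simp
  moreover have "0 \<le> \<eta> / 2 * Q u ut" using q \<eta>_pos by simp
  ultimately show ?thesis unfolding J_unfold using l by linarith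
qed


lemma Jconv:
  assumes u: "\<And>k. u k \<in> Uad T" and ub: "ub \<in> Uad T"
    and ae: "AE t in lebesgue_on {0..T}. (\<lambda>k. u k t) \<longlonglongrightarrow> ub t"
  shows "(\<lambda>k. J \<mu> (u k)) \<longlonglongrightarrow> J \<mu> ub"
proof -
  have l: "(\<lambda>k. integral {0..T} (\<lambda>t. \<psi> t \<bullet> u k t)) \<longlonglongrightarrow> integral {0..T} (\<lambda>t. \<psi> t \<bullet> ub t)"
  proof (rule ae_dct_interval[where B = "M\<psi> * real CARD('m)"])
    show "(\<lambda>t. \<psi> t \<bullet> u k t) \<in> borel_measurable (lebesgue_on {0..T})" for k by (rule lin_meas[OF u])
    show "norm (\<psi> t \<bullet> u k t) \<le> M\<psi> * real CARD('m)" if "t \<in> {0..T}" for k t by (rule lin_bound[OF u that])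
    show "(\<lambda>t. \<psi> t \<bullet> ub t) \<in> borel_measurable (lebesgue_on {0..T})" by (rule lin_meas[OF ub])
    show "AE t in lebesgue_on {0..T}. (\<lambda>k. \<psi> t \<bullet> u k t) \<longlonglongrightarrow> \<psi> t \<bullet> ub t"
      using ae by (rule eventually_mono) (intro tendsto_inner tendsto_const)
  qed
  have q: "(\<lambda>k. Q (u k) ut) \<longlonglongrightarrow> Q ub ut"
    unfolding Q_def
  proof (rule ae_dct_interval[where B = "(2 * real CARD('m))\<^sup>2"])
    show "(\<lambda>t. (norm (u k t - ut t))\<^sup>2) \<in> borel_measurable (lebesgue_on {0..T})" for k by (rule sq_meas[OF u ut_adm])
    show "norm ((norm (u k t - ut t))\<^sup>2) \<le> (2 * real CARD('m))\<^sup>2" if "t \<in> {0..T}" for k t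
      by (rule sq_bound[OF u ut_adm that])
    show "(\<lambda>t. (norm (ub t - ut t))\<^sup>2) \<in> borel_measurable (lebesgue_on {0..T})" by (rule sq_meas[OF ub ut_adm])
    show "AE t in lebesgue_on {0..T}. (\<lambda>k. (norm (u k t - ut t))\<^sup>2) \<longlonglongrightarrow> (norm (ub t - ut t))\<^sup>2"
      using ae by (rule eventually_mono) (intro tendsto_power tendsto_norm tendsto_diff tendsto_const)
  qed
  have L1: "(\<lambda>k. integral {0..T} (\<lambda>s. norm (u k s - ub s))) \<longlonglongrightarrow> integral {0..T} (\<lambda>s. 0::real)"
  proof (rule ae_dct_interval[where B = "2 * real CARD('m)"])
    show "(\<lambda>s. norm (u k s - ub s)) \<in> borel_measurable (lebesgue_on {0..T})" for k
      using Uad_meas[OF u] Uad_meas[OF ub] by measurable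
    show "norm (norm (u k t - ub t)) \<le> 2 * real CARD('m)" if "t \<in> {0..T}" for k t
      using diff_bound[OF u ub that] by simp
    show "(\<lambda>s. 0::real) \<in> borel_measurable (lebesgue_on {0..T})" by simp
    show "AE t in lebesgue_on {0..T}. (\<lambda>k. norm (u k t - ub t)) \<longlonglongrightarrow> 0"
      using ae by (rule eventually_mono) (intro tendsto_norm_zero, simp add: LIM_zero)
  qed
  have E: "(\<lambda>k. Ecost T f0 f \<mu> (u k)) \<longlonglongrightarrow> Ecost T f0 f \<mu> ub"
    by (rule Econv[OF u ub]) (use L1 in simp)
  show ?thesis unfolding J_unfold by (intro tendsto_intros l q E)
qed

lemma complete_U:
  fixes u :: "nat \<Rightarrow> real \<Rightarrow> real^'m"
  assumes u: "\<And>k. u k \<in> Uad T"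
    and cau: "\<And>e. e > 0 \<Longrightarrow> \<exists>N. \<forall>i\<ge>N. \<forall>j\<ge>N. Q (u i) (u j) < e"
  shows "\<exists>r ub. strict_mono r \<and> ub \<in> Uad T \<and> (AE t in lebesgue_on {0..T}. (\<lambda>k. u (r k) t) \<longlonglongrightarrow> ub t)"
proof -
  let ?M = "lebesgue_on {0..T}"
  have um: "u k \<in> borel_measurable ?M" for k by (rule Uad_meas[OF u])
  have ui: "integrable ?M (u k)" for k
    by (rule int_interval_bounded(1)[OF um]) (rule Uad_bound[OF u])
  have nm: "(\<lambda>t. norm (u i t - u j t)) \<in> borel_measurable ?M" for i j using um[of i] um[of j] by measurable
  have nb: "norm (norm (u i t - u j t)) \<le> 2 * real CARD('m)" if "t \<in> {0..T}" for i j t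
    using diff_bound[OF u[of i] u[of j] that] by simp
  have L1c: "\<exists>N. \<forall>i\<ge>N. \<forall>j\<ge>N. (LINT t|?M. norm (u i t - u j t)) < e" if e: "e > 0" for e
  proof -
    define d where "d = e / (2 * T)"
    have d: "d > 0" using e T_pos by (simp add: d_def)
    obtain N where N: "\<And>i j. i \<ge> N \<Longrightarrow> j \<ge> N \<Longrightarrow> Q (u i) (u j) < d * e / 2"
      using cau[of "d * e / 2"] d e by auto
    show ?thesis
    proof (intro exI[of _ N] allI impI)
      fix i j assume ij: "i \<ge> N" "j \<ge> N"
      have eqL: "(LINT t|?M. norm (u i t - u j t)) = integral {0..T} (\<lambda>t. norm (u i t - u j t))"
        by (rule int_interval_bounded(2)[OF nm nb])
      have intn: "(\<lambda>t. norm (u i t - u j t)) integrable_on {0..T}"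
        by (rule bounded_meas_integrable[OF nm nb])
      have hb: "((\<lambda>t. d + (1 / d) * (norm (u i t - u j t))\<^sup>2) has_integral d * T + (1 / d) * Q (u i) (u j)) {0..T}"
      proof -
        have "((\<lambda>t. d) has_integral d * T) {0..T}" using has_integral_const_real[of d 0 T] T_pos by (simp add: mult.commute)
        moreover have "((\<lambda>t. (1 / d) * (norm (u i t - u j t))\<^sup>2) has_integral (1 / d) * Q (u i) (u j)) {0..T}"
          unfolding Q_def by (intro has_integral_mult_right integrable_integral sq_int u)
        ultimately show ?thesis by (rule has_integral_add)
      qed
      have "integral {0..T} (\<lambda>t. norm (u i t - u j t)) \<le> integral {0..T} (\<lambda>t. d + (1 / d) * (norm (u i t - u j t))\<^sup>2)"
      proof (rule integral_le[OF intn])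
        show "(\<lambda>t. d + (1 / d) * (norm (u i t - u j t))\<^sup>2) integrable_on {0..T}" using hb by blast
        fix t
        show "norm (u i t - u j t) \<le> d + (1 / d) * (norm (u i t - u j t))\<^sup>2"
        proof (cases "norm (u i t - u j t) \<le> d")
          case True then show ?thesis using d by (simp add: add_increasing2)
        next
          case False
          then have "norm (u i t - u j t) * d \<le> norm (u i t - u j t) * norm (u i t - u j t)"
            by (intro mult_left_mono) auto
          then have "norm (u i t - u j t) \<le> (1 / d) * (norm (u i t - u j t))\<^sup>2"
            using d by (simp add: field_simps power2_eq_square)
          then show ?thesis using d by linarith
        qed
      qed
      also have "\<dots> = d * T + (1 / d) * Q (u i) (u j)" using hb by (simp add: integral_unique)
      also have "\<dots> < d * T + (1 / d) * (d * e / 2)"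
        using N[OF ij] d by (intro add_strict_left_mono mult_strict_left_mono) auto
      also have "\<dots> = e" using d T_pos by (simp add: d_def field_simps)
      finally show "(LINT t|?M. norm (u i t - u j t)) < e" unfolding eqL .
    qed
  qed
  obtain r where r: "strict_mono r" and aec: "AE t in ?M. Cauchy (\<lambda>k. u (r k) t)"
    using cauchy_L1_AE_cauchy_subseq[of ?M u, OF ui L1c] by blast
  define ub0 where "ub0 t = lim (\<lambda>k. u (r k) t)" for t
  define Box where "Box = cbox (-1) (1::real^'m)"
  have "(0::real^'m) \<in> Box" unfolding Box_def mem_box_cart by simp
  then have Box: "convex Box" "closed Box" "Box \<noteq> {}" unfolding Box_def by auto
  define ub where "ub t = closest_point Box (ub0 t)" for t
  have ub0m: "ub0 \<in> borel_measurable ?M" unfolding ub0_def by (intro borel_measurable_lim_metric um)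
  have ubm: "ub \<in> borel_measurable ?M"
    unfolding ub_def
    by (rule measurable_compose[OF ub0m borel_measurable_continuous_onI[OF continuous_on_closest_point[OF Box]]])
  have inBox: "x \<in> Box \<longleftrightarrow> (\<forall>i. \<bar>x $ i\<bar> \<le> 1)" for x :: "real^'m"
    unfolding Box_def mem_box_cart by (auto simp: abs_le_iff)
  have ubU: "ub \<in> Uad T"
    unfolding Uad_def using ubm closest_point_in_set[OF Box(2,3)] inBox by (auto simp: ub_def)
  have "AE t in ?M. Cauchy (\<lambda>k. u (r k) t) \<and> t \<in> space ?M"
    by (rule eventually_conj[OF aec AE_space])
  then have "AE t in ?M. (\<lambda>k. u (r k) t) \<longlonglongrightarrow> ub t"
  proof (rule eventually_mono)
      fix t assume t: "Cauchy (\<lambda>k. u (r k) t) \<and> t \<in> space ?M"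
      then have lim: "(\<lambda>k. u (r k) t) \<longlonglongrightarrow> ub0 t"
        unfolding ub0_def by (simp add: Cauchy_convergent_iff convergent_LIMSEQ_iff)
      have "u (r k) t \<in> Box" for k using u[of "r k"] t unfolding Uad_def inBox by auto
      then have "ub0 t \<in> Box" by (rule closed_sequentially[OF Box(2) _ lim])
      then have "ub t = ub0 t" unfolding ub_def by (rule closest_point_self)
      then show "(\<lambda>k. u (r k) t) \<longlonglongrightarrow> ub t" using lim by simp
  qed
  then show ?thesis using r ubU by blast
qed


lemma mid_ineq:
  assumes u: "u \<in> Uad T" and v: "v \<in> Uad T" and mn: "\<And>w. w \<in> Uad T \<Longrightarrow> m \<le> J \<mu> w"
  shows "\<eta> / 8 * Q u v \<le> (J \<mu> u + J \<mu> v) / 2 - m"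
  using strong_conv[OF u v] mn[OF mid_U[OF u v]] by linarith

lemma exists_min: "\<exists>ub. is_minimizer (Uad T) (J \<mu>) ub"
proof -
  define m where "m = Inf (J \<mu> ` Uad T)"
  have ne: "J \<mu> ` Uad T \<noteq> {}" using ut_adm by auto
  have bdd: "bdd_below (J \<mu> ` Uad T)" unfolding bdd_below_def using J_lower by blast
  have mle: "m \<le> J \<mu> w" if "w \<in> Uad T" for w unfolding m_def by (rule cInf_lower[OF _ bdd]) (use that in auto)
  have "\<forall>k. \<exists>v. v \<in> Uad T \<and> J \<mu> v < m + inverse (real (Suc k))"
  proof
    fix k
    have "m < m + inverse (real (Suc k))" by simp
    then obtain y where "y \<in> J \<mu> ` Uad T" "y < m + inverse (real (Suc k))"
      using cInf_lessD[OF ne] unfolding m_def by blast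
    then show "\<exists>v. v \<in> Uad T \<and> J \<mu> v < m + inverse (real (Suc k))" by auto
  qed
  then obtain u where u: "\<And>k. u k \<in> Uad T" and uJ: "\<And>k. J \<mu> (u k) < m + inverse (real (Suc k))"
    by metis
  have cau: "\<exists>N. \<forall>i\<ge>N. \<forall>j\<ge>N. Q (u i) (u j) < e" if e: "e > 0" for e
  proof -
    obtain N where N: "inverse (real (Suc N)) < \<eta> * e / 8"
      using reals_Archimedean[of "\<eta> * e / 8"] e \<eta>_pos by auto
    show ?thesis
    proof (intro exI[of _ N] allI impI)
      fix i j assume ij: "i \<ge> N" "j \<ge> N"
      have inv: "inverse (real (Suc i)) \<le> inverse (real (Suc N))" "inverse (real (Suc j)) \<le> inverse (real (Suc N))"
        using ij by (auto intro!: le_imp_inverse_le)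
      have "\<eta> / 8 * Q (u i) (u j) \<le> (J \<mu> (u i) + J \<mu> (u j)) / 2 - m" by (rule mid_ineq[OF u u mle])
      also have "\<dots> < inverse (real (Suc N))"
      proof -
        have aux: "\<And>x y a b c. x < m + a \<Longrightarrow> y < m + b \<Longrightarrow> a \<le> c \<Longrightarrow> b \<le> c \<Longrightarrow> (x + y) / 2 - m < (c::real)"
          by (simp add: field_simps)
        show ?thesis by (rule aux[OF uJ[of i] uJ[of j] inv])
      qed
      also have "\<dots> < \<eta> * e / 8" by (rule N)
      finally have "\<eta> * Q (u i) (u j) < \<eta> * e" by simp
      then show "Q (u i) (u j) < e" using \<eta>_pos by simp
    qed
  qed
  obtain r ub where r: "strict_mono r" and ub: "ub \<in> Uad T"
    and ae: "AE t in lebesgue_on {0..T}. (\<lambda>k. u (r k) t) \<longlonglongrightarrow> ub t"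
    using complete_U[OF u cau] by blast
  have lim1: "(\<lambda>k. J \<mu> (u (r k))) \<longlonglongrightarrow> J \<mu> ub" by (rule Jconv[OF u ub ae])
  have lim2: "(\<lambda>k. m + inverse (real (Suc (r k)))) \<longlonglongrightarrow> m + 0"
    by (intro tendsto_add tendsto_const LIMSEQ_subseq_LIMSEQ[OF LIMSEQ_inverse_real_of_nat r, unfolded o_def])
  have "J \<mu> ub \<le> m + 0"
    by (rule LIMSEQ_le[OF lim1 lim2]) (use uJ less_imp_le in blast)
  then have "\<forall>w\<in>Uad T. J \<mu> ub \<le> J \<mu> w" using mle by force
  then show ?thesis using ub unfolding is_minimizer_def by blast
qed

lemma unique_min:
  assumes ub: "is_minimizer (Uad T) (J \<mu>) ub" and v: "is_minimizer (Uad T) (J \<mu>) v"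
  shows "AE t in lebesgue_on {0..T}. v t = ub t"
proof -
  have ubU: "ub \<in> Uad T" and vU: "v \<in> Uad T" using ub v by (auto simp: is_minimizer_def)
  have mle: "\<And>w. w \<in> Uad T \<Longrightarrow> J \<mu> ub \<le> J \<mu> w" using ub by (auto simp: is_minimizer_def)
  have eq: "J \<mu> v = J \<mu> ub" using mle[OF vU] v ubU by (auto simp: is_minimizer_def intro: antisym)
  have "\<eta> / 8 * Q v ub \<le> (J \<mu> v + J \<mu> ub) / 2 - J \<mu> ub" by (rule mid_ineq[OF vU ubU mle])
  then have "\<eta> / 8 * Q v ub \<le> 0" using eq by simp
  then have Q0: "Q v ub = 0" using Q_nonneg[OF vU ubU] \<eta>_pos by (simp add: mult_le_0_iff)
  let ?M = "lebesgue_on {0..T}"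
  have m: "(\<lambda>t. (norm (v t - ub t))\<^sup>2) \<in> borel_measurable ?M" by (rule sq_meas[OF vU ubU])
  have i: "integrable ?M (\<lambda>t. (norm (v t - ub t))\<^sup>2)"
    by (rule int_interval_bounded(1)[OF m sq_bound[OF vU ubU]])
  have "integral\<^sup>L ?M (\<lambda>t. (norm (v t - ub t))\<^sup>2) = 0"
    using Q0 int_interval_bounded(2)[OF m sq_bound[OF vU ubU]] unfolding Q_def by simp
  then have "AE t in ?M. (norm (v t - ub t))\<^sup>2 = 0"
    using integral_nonneg_eq_0_iff_AE[OF i] by simp
  then show ?thesis by (rule eventually_mono) simp
qed

lemma conv_min:
  fixes \<mu>N :: "nat \<Rightarrow> (real^'p) measure"
  assumes apx: "\<And>uN. (\<And>N. uN N \<in> Uad T) \<Longrightarrow> (\<lambda>N. J (\<mu>N N) (uN N) - J \<mu> (uN N)) \<longlonglongrightarrow> 0"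
    and ub: "is_minimizer (Uad T) (J \<mu>) ub"
    and uN: "\<And>N. N \<ge> 1 \<Longrightarrow> is_minimizer (Uad T) (J (\<mu>N N)) (uN N)"
  shows "(\<lambda>N. sqrt (Q (uN N) ub)) \<longlonglongrightarrow> 0"
proof -
  have ubU: "ub \<in> Uad T" using ub by (auto simp: is_minimizer_def)
  have mle: "\<And>w. w \<in> Uad T \<Longrightarrow> J \<mu> ub \<le> J \<mu> w" using ub by (auto simp: is_minimizer_def)
  define vN where "vN N = (if 1 \<le> N then uN N else ub)" for N
  have vN: "vN N \<in> Uad T" for N using uN ubU by (auto simp: vN_def is_minimizer_def)
  define e1 where "e1 N = J (\<mu>N N) (vN N) - J \<mu> (vN N)" for N
  define e2 where "e2 N = J (\<mu>N N) ub - J \<mu> ub" for N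
  have e1: "e1 \<longlonglongrightarrow> 0" unfolding e1_def by (rule apx[OF vN])
  have e2: "e2 \<longlonglongrightarrow> 0" unfolding e2_def using apx[of "\<lambda>N. ub"] ubU by simp
  have bnd: "Q (uN N) ub \<le> 4 / \<eta> * (e2 N - e1 N)" if N: "N \<ge> 1" for N
  proof -
    have uNU: "uN N \<in> Uad T" and mN: "J (\<mu>N N) (uN N) \<le> J (\<mu>N N) ub"
      using uN[OF N] ubU by (auto simp: is_minimizer_def)
    have "J \<mu> (uN N) - J \<mu> ub \<le> e2 N - e1 N"
      using mN N unfolding e1_def e2_def vN_def by simp
    moreover have "\<eta> / 8 * Q (uN N) ub \<le> (J \<mu> (uN N) + J \<mu> ub) / 2 - J \<mu> ub"
      by (rule mid_ineq[OF uNU ubU mle])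
    ultimately have "\<eta> * Q (uN N) ub \<le> 4 * (e2 N - e1 N)" by simp
    then show ?thesis using \<eta>_pos by (simp add: field_simps)
  qed
  have Qlim: "(\<lambda>N. Q (uN N) ub) \<longlonglongrightarrow> 0"
  proof (rule tendsto_sandwich[where f = "\<lambda>N. 0" and h = "\<lambda>N. 4 / \<eta> * (e2 N - e1 N)"])
    show "\<forall>\<^sub>F N in sequentially. 0 \<le> Q (uN N) ub"
      using eventually_ge_at_top[of 1] by (rule eventually_mono)
        (use uN ubU Q_nonneg in \<open>auto simp: is_minimizer_def\<close>)
    show "\<forall>\<^sub>F N in sequentially. Q (uN N) ub \<le> 4 / \<eta> * (e2 N - e1 N)"
      using eventually_ge_at_top[of 1] by (rule eventually_mono) (rule bnd)
    show "(\<lambda>N. 0) \<longlonglongrightarrow> (0::real)" by simp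
    show "(\<lambda>N. 4 / \<eta> * (e2 N - e1 N)) \<longlonglongrightarrow> 0"
    proof -
      have "(\<lambda>N. e2 N - e1 N) \<longlonglongrightarrow> 0" using tendsto_diff[OF e2 e1] by simp
      then show ?thesis by (rule tendsto_mult_right_zero)
    qed
  qed
  show ?thesis using tendsto_real_sqrt[OF Qlim] by simp
qed


end


theorem mainTheorem11:
  fixes T \<alpha> \<eta> :: real
    and \<psi> :: "real \<Rightarrow> real^'m"
    and \<theta>prior :: "real^'p" and \<Sigma>prior :: "real^'p^'p"
    and f0 :: "real^'p \<Rightarrow> real^'n \<Rightarrow> real^'n"
    and f :: "'m \<Rightarrow> real^'p \<Rightarrow> real^'n \<Rightarrow> real^'n"
    and a b :: "real^'p \<Rightarrow> real"
    and \<mu>N :: "nat \<Rightarrow> (real^'p) measure"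
    and ut :: "real \<Rightarrow> real^'m"
  defines "\<mu> \<equiv> gaussian_measure \<theta>prior \<Sigma>prior"
  assumes T_pos: "T > 0" and \<alpha>_pos: "\<alpha> > 0"
    and \<psi>_cont: "continuous_on {0..T} \<psi>"
    and \<Sigma>_sym: "transpose \<Sigma>prior = \<Sigma>prior"
    and \<Sigma>_pd: "\<And>v. v \<noteq> 0 \<Longrightarrow> v \<bullet> (\<Sigma>prior *v v) > 0"
    \<comment> \<open>(A1)\<close>
    and A1_smooth0: "smooth (\<lambda>z::(real^'p) \<times> (real^'n). f0 (fst z) (snd z))"
    and A1_smooth: "\<And>i. smooth (\<lambda>z::(real^'p) \<times> (real^'n). f i (fst z) (snd z))"
    and A1_growth: "\<And>\<theta>. \<exists>c. \<forall>x. norm (f0 \<theta> x) \<le> c * (1 + norm x) \<and>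
                              (\<forall>i. norm (f i \<theta> x) \<le> c * (1 + norm x))"
    \<comment> \<open>(A2)\<close>
    and A2_a_meas: "a \<in> borel_measurable borel"
    and A2_a_L2: "integrable \<mu> (\<lambda>\<theta>. (a \<theta>)\<^sup>2)"
    and A2_a_loc: "\<And>K. compact K \<Longrightarrow> bounded (a ` K)"
    and A2_b_meas: "b \<in> borel_measurable borel"
    and A2_b_loc: "\<And>K. compact K \<Longrightarrow> bounded (b ` K)"
    and A2_x: "\<And>u t \<theta>. u \<in> Uad T \<Longrightarrow> t \<in> {0..T} \<Longrightarrow>
                 norm (traj T f0 f u \<theta> t) \<le> a \<theta>"
    and A2_dx: "\<And>u t \<theta> i. u \<in> Uad T \<Longrightarrow> t \<in> {0..T} \<Longrightarrow>
                 \<exists>d. ((\<lambda>s. traj T f0 f u (\<theta> + s *\<^sub>R axis i 1) t) has_vector_derivative d) (at 0)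
                     \<and> norm d \<le> b \<theta>"
    \<comment> \<open>(A3)\<close>
    and A3: "\<And>u v l. u \<in> Uad T \<Longrightarrow> v \<in> Uad T \<Longrightarrow> l \<in> {0..1} \<Longrightarrow>
               Ecost T f0 f \<mu> (\<lambda>t. l *\<^sub>R u t + (1 - l) *\<^sub>R v t)
                 \<le> l * Ecost T f0 f \<mu> u + (1 - l) * Ecost T f0 f \<mu> v"
    and approx: "approx_seq T \<alpha> \<psi> f0 f \<mu> \<mu>N"
    and \<eta>_pos: "\<eta> > 0"
    and ut_adm: "ut \<in> Uad T"
  shows "\<exists>ubar. is_minimizer (Uad T) (Jfun T \<alpha> \<psi> f0 f ut \<eta> \<mu>) ubar \<and>
           (\<forall>v. is_minimizer (Uad T) (Jfun T \<alpha> \<psi> f0 f ut \<eta> \<mu>) v \<longrightarrow>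
                 (AE t in lebesgue_on {0..T}. v t = ubar t)) \<and>
           (\<forall>uN. (\<forall>N\<ge>1. is_minimizer (Uad T) (Jfun T \<alpha> \<psi> f0 f ut \<eta> (\<mu>N N)) (uN N)) \<longrightarrow>
                 ((\<lambda>N. sqrt (integral {0..T} (\<lambda>t. (norm (uN N t - ubar t))\<^sup>2))) \<longlonglongrightarrow> 0))"
proof -
  have sets_mu: "sets \<mu> = sets borel" unfolding \<mu>_def gaussian_measure_def by simp
  have vfa: "vf T f0 f \<theta>" for \<theta>
  proof
    show "0 < T" by (rule T_pos)
    show "continuous_on UNIV (f0 \<theta>)" using smooth_cont[OF A1_smooth0, of \<theta>] by simp
    show "continuous_on UNIV (f i \<theta>)" for i using smooth_cont[OF A1_smooth[of i], of \<theta>] by simp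
    show "\<exists>c. \<forall>x. norm (f0 \<theta> x) \<le> c * (1 + norm x) \<and> (\<forall>i. norm (f i \<theta> x) \<le> c * (1 + norm x))"
      by (rule A1_growth)
    fix R :: real
    obtain L0 where L0: "\<And>x y. norm x \<le> R \<Longrightarrow> norm y \<le> R \<Longrightarrow> norm (f0 \<theta> x - f0 \<theta> y) \<le> L0 * norm (x - y)"
      using smooth_lip[OF A1_smooth0, of R \<theta>] by auto
    have "\<forall>i. \<exists>L. \<forall>x y. norm x \<le> R \<longrightarrow> norm y \<le> R \<longrightarrow> norm (f i \<theta> x - f i \<theta> y) \<le> L * norm (x - y)"
    proof
      fix i
      show "\<exists>L. \<forall>x y. norm x \<le> R \<longrightarrow> norm y \<le> R \<longrightarrow> norm (f i \<theta> x - f i \<theta> y) \<le> L * norm (x - y)"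
        using smooth_lip[OF A1_smooth[of i], of R \<theta>] by auto
    qed
    then obtain Lf where Lf: "\<And>i x y. norm x \<le> R \<Longrightarrow> norm y \<le> R \<Longrightarrow> norm (f i \<theta> x - f i \<theta> y) \<le> Lf i * norm (x - y)"
      by metis
    define L where "L = max L0 0 + (\<Sum>i\<in>UNIV. max (Lf i) 0)"
    have le0: "max L0 0 \<le> L" unfolding L_def by (intro add_increasing2 sum_nonneg) auto
    have lei: "max (Lf i) 0 \<le> L" for i
    proof -
      have "max (Lf i) 0 \<le> (\<Sum>i\<in>UNIV. max (Lf i) 0)"
        by (rule member_le_sum) auto
      moreover have "0 \<le> max L0 0" by simp
      ultimately show ?thesis unfolding L_def by linarith
    qed
    show "\<exists>L. \<forall>x y. norm x \<le> R \<longrightarrow> norm y \<le> R \<longrightarrow>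
        norm (f0 \<theta> x - f0 \<theta> y) \<le> L * norm (x - y) \<and> (\<forall>i. norm (f i \<theta> x - f i \<theta> y) \<le> L * norm (x - y))"
    proof (intro exI[of _ L] allI impI conjI)
      fix x y :: "real^'n" assume x: "norm x \<le> R" and y: "norm y \<le> R"
      show "norm (f0 \<theta> x - f0 \<theta> y) \<le> L * norm (x - y)"
        using L0[OF x y] le0 by (meson max.cobounded1 mult_right_mono norm_ge_zero order_trans)
      fix i
      show "norm (f i \<theta> x - f i \<theta> y) \<le> L * norm (x - y)"
        using Lf[OF x y, of i] lei[of i] by (meson max.cobounded1 mult_right_mono norm_ge_zero order_trans)
    qed
  qed
  interpret S: setting T \<alpha> \<eta> \<psi> f0 f a b ut \<mu>
    by (rule setting.intro) (fact T_pos \<alpha>_pos \<psi>_cont \<eta>_pos ut_adm vfa sets_mu A2_a_L2 A2_a_loc A2_b_loc A2_x A2_dx A3)+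
  have Jeq: "S.J \<nu> = Jfun T \<alpha> \<psi> f0 f ut \<eta> \<nu>" for \<nu> by (simp add: fun_eq_iff S.J_def)
  have apx: "(\<lambda>N. S.J (\<mu>N N) (uN N) - S.J \<mu> (uN N)) \<longlonglongrightarrow> 0" if "\<And>N. uN N \<in> Uad T" for uN
    using approx \<eta>_pos ut_adm that unfolding approx_seq_def Jeq by auto
  obtain ub where ub: "is_minimizer (Uad T) (S.J \<mu>) ub" using S.exists_min by blast
  show ?thesis
  proof (intro exI[of _ ub] conjI allI impI)
    show "is_minimizer (Uad T) (Jfun T \<alpha> \<psi> f0 f ut \<eta> \<mu>) ub" using ub by (simp add: Jeq)
  next
    fix v assume "is_minimizer (Uad T) (Jfun T \<alpha> \<psi> f0 f ut \<eta> \<mu>) v"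
    then show "AE t in lebesgue_on {0..T}. v t = ub t" using S.unique_min[OF ub] by (simp add: Jeq)
  next
    fix uN assume "\<forall>N\<ge>1. is_minimizer (Uad T) (Jfun T \<alpha> \<psi> f0 f ut \<eta> (\<mu>N N)) (uN N)"
    then have "\<And>N. N \<ge> 1 \<Longrightarrow> is_minimizer (Uad T) (S.J (\<mu>N N)) (uN N)" by (simp add: Jeq)
    from S.conv_min[OF apx ub this]
    show "(\<lambda>N. sqrt (integral {0..T} (\<lambda>t. (norm (uN N t - ub t))\<^sup>2))) \<longlonglongrightarrow> 0"
      unfolding S.Q_def .
  qed
qed

end
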